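(* Assume the standing setting described in the context (in particular $\nu$ ergodic, $\nu$ the unique $\mu$-stationary probability projecting to $\nu_i$, and $\kappa_i>0$). Then almost surely $\nu_{F_i(n)}$ is non-atomic for all $n\in\mathbb{Z}$.
   Context: Standing setting: $d\ge2$, $\mu$ a Borel probability on $\mathrm{GL}(\mathbb{R}^d)$ with $\int|\log\sigma_j(a)|d\mu(a)<\infty$ for all singular values $\sigma_j$. $\mathrm{Flags}(\mathbb{R}^d)$ is the space of complete flags $F=(S_0,\dots,S_d)$; for fixed $i\in\{1,\dots,d-1\}$, $F_i$ is $F$ with $S_i$ removed, an element of $\mathrm{Flags}_i(\mathbb{R}^d)$. $\nu$ is an ergodic (extremal among $\mu$-stationary) $\mu$-stationary probability on $\mathrm{Flags}(\mathbb{R}^d)$, $\nu_i$ its projection to $\mathrm{Flags}_i(\mathbb{R}^d)$, and $\nu$ is the unique $\mu$-stationary probability projecting to $\nu_i$. A Borel disintegration $x_i\mapsto\nu_{x_i}$ of $\nu$ over $\nu_i$ is fixed. $(A(n))_{n\in\mathbb{Z}}$ is i.i.d. with distribution $\mu$ and $(F(n))_{n\in\mathbb{Z}}$ are random flags with distribution $\nu$ such that $((A(n),F(n)))_n$ is stationary, $F(n)$ is independent of $(A(m))_{m\ge n}$, and $A(n+k)\cdots A(n)F(n)=F(n+k+1)$ for $n\in\mathbb{Z},k\ge0$. $S_j(n)$ is the $j$-dimensional subspace of $F(n)$ and $F_i(n)$ the incomplete flag. Lyapunov exponents: $\chi_1+\cdots+\chi_j=\mathbb{E}[\log|\det_{S_j(0)}(A(0))|]$,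 $|\det_S(A)|$ the Jacobian of $A|_S$. $\kappa_i=\mathbb{E}\left[\log\frac{dA(0)\nu_{F_i(0)}}{d\nu_{F_i(1)}}(F(1))\right]$ (here $A(0)\nu_{F_i(0)}\ll\nu_{F_i(1)}$ a.s.), and it is assumed that $\kappa_i>0$. *)

theory Defs
  imports "HOL-Probability.Probability"
begin

text \<open>Complete flags in R^d, d = CARD('n).  A flag is represented by the function
  j \<mapsto> S_j (for j \<le> d), with S_j = {} for j > d to make the representation unique.\<close>

type_synonym 'n flag = "nat \<Rightarrow> (real^'n) set"

definition flags :: "'n::finite flag set" where
  "flags = {F. (\<forall>j\<le>CARD('n). subspace (F j) \<and> dim (F j) = j)
              \<and> (\<forall>j<CARD('n). F j \<subseteq> F (Suc j))
              \<and> (\<forall>j>CARD('n). F j = {})}"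

text \<open>Incomplete flag F_i: S_i removed (represented by setting the i-th entry to {}).\<close>
definition flag_i :: "nat \<Rightarrow> 'n::finite flag \<Rightarrow> 'n flag" where
  "flag_i i F = F(i := {})"

definition flags_i :: "nat \<Rightarrow> 'n::finite flag set" where
  "flags_i i = flag_i i ` flags"

text \<open>Orthogonal projection matrix onto a subspace; used to define the (Borel)
  topology / sigma-algebra on flag spaces.\<close>
definition projm :: "(real^'n::finite) set \<Rightarrow> real^'n^'n" where
  "projm S = matrix (closest_point S)"

definition flagM :: "'n::finite flag measure" where
  "flagM = vimage_algebra flags
      (\<lambda>F. restrict (\<lambda>j. projm (F j)) {..CARD('n)}) (PiM {..CARD('n)} (\<lambda>_. borel))"

definition flag_iM :: "nat \<Rightarrow> 'n::finite flag measure" where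
  "flag_iM i = vimage_algebra (flags_i i)
      (\<lambda>F. restrict (\<lambda>j. projm (F j)) ({..CARD('n)} - {i}))
      (PiM ({..CARD('n)} - {i}) (\<lambda>_. borel))"

text \<open>Action of a matrix on a flag.\<close>
definition act :: "real^'n^'n \<Rightarrow> 'n::finite flag \<Rightarrow> 'n flag" where
  "act A F = (\<lambda>j. (\<lambda>x. A *v x) ` F j)"

text \<open>j-th singular value (Courant--Fischer min-max form), 1 \<le> j \<le> d.\<close>
definition sing_val :: "real^'n^'n \<Rightarrow> nat \<Rightarrow> real" where
  "sing_val A j = Sup {Inf {norm (A *v v) | v. v \<in> V \<and> norm v = 1} | V :: (real^'n::finite) set.
                        subspace V \<and> dim V = j}"

text \<open>mu-stationary probability measures on Flags(R^d).\<close>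
definition stationary :: "(real^'n^'n) measure \<Rightarrow> 'n::finite flag measure \<Rightarrow> bool" where
  "stationary \<mu> N \<longleftrightarrow> prob_space N \<and> sets N = sets flagM \<and>
     (\<forall>E\<in>sets flagM. emeasure N E =
        (\<integral>\<^sup>+ A. emeasure N {F \<in> space flagM. act A F \<in> E} \<partial>\<mu>))"

text \<open>Ergodic = extremal among mu-stationary probabilities.\<close>
definition ergodic_stationary :: "(real^'n^'n) measure \<Rightarrow> 'n::finite flag measure \<Rightarrow> bool" where
  "ergodic_stationary \<mu> N \<longleftrightarrow> stationary \<mu> N \<and>
     \<not> (\<exists>N1 N2 (t::real). stationary \<mu> N1 \<and> stationary \<mu> N2 \<and> N1 \<noteq> N2 \<and> 0 < t \<and> t < 1 \<and>
           (\<forall>E\<in>sets flagM. measure N E = t * measure N1 E + (1 - t) * measure N2 E))"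

text \<open>Product A(n+k) \<cdots> A(n).\<close>
fun mprod :: "(int \<Rightarrow> real^'n^'n) \<Rightarrow> int \<Rightarrow> nat \<Rightarrow> real^'n^'n" where
  "mprod A n 0 = A n"
| "mprod A n (Suc k) = A (n + int (Suc k)) ** mprod A n k"

end

theory Submission
  imports Defs
begin

(* ---- LA ---- *)

lemma cp_subspace_props:
  fixes S :: "'a::euclidean_space set"
  assumes "subspace S"
  shows "closest_point S x \<in> S" "\<And>s. s \<in> S \<Longrightarrow> inner (x - closest_point S x) s = 0"
proof -
  have cl: "closed S" using assms closed_subspace by blast
  have ne: "S \<noteq> {}" using assms subspace_0 by blast
  have cv: "convex S" using assms subspace_imp_convex by blast
  show c: "closest_point S x \<in> S" using closest_point_in_set[OF cl ne] .
  fix s assume s: "s \<in> S"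
  let ?c = "closest_point S x"
  have "inner (x - ?c) ((?c + s) - ?c) \<le> 0"
    by (rule closest_point_dot[OF cv cl]) (use assms c s in \<open>simp add: subspace_add\<close>)
  moreover have "inner (x - ?c) ((?c - s) - ?c) \<le> 0"
    by (rule closest_point_dot[OF cv cl]) (use assms c s in \<open>simp add: subspace_diff\<close>)
  ultimately show "inner (x - ?c) s = 0" by (simp add: inner_diff_right)
qed

lemma cp_subspace_char:
  fixes S :: "'a::euclidean_space set"
  assumes "subspace S" "y \<in> S" "\<And>s. s \<in> S \<Longrightarrow> inner (x - y) s = 0"
  shows "closest_point S x = y"
proof -
  have cl: "closed S" using assms closed_subspace by blast
  have cv: "convex S" using assms subspace_imp_convex by blast
  have "dist x y \<le> dist x z" if z: "z \<in> S" for z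
  proof -
    have yz: "y - z \<in> S" using assms z subspace_diff by blast
    have "(dist x z)^2 = (norm ((x - y) + (y - z)))^2" by (simp add: dist_norm)
    also have "\<dots> = (norm (x-y))^2 + (norm (y - z))^2"
      using assms(3)[OF yz] by (intro norm_add_Pythagorean) (simp add: orthogonal_def)
    finally have "(dist x y)^2 \<le> (dist x z)^2" by (simp add: dist_norm)
    then show ?thesis by (simp add: power2_le_iff_abs_le)
  qed
  then show ?thesis using closest_point_unique[OF cv cl assms(2)] by auto
qed

lemma cp_subspace_linear:
  fixes S :: "'a::euclidean_space set"
  assumes S: "subspace S"
  shows "linear (closest_point S)"
proof (rule linearI)
  fix x y
  show "closest_point S (x + y) = closest_point S x + closest_point S y"
    apply (rule cp_subspace_char[OF S])
    using cp_subspace_props[OF S] S subspace_add apply blast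
    using cp_subspace_props(2)[OF S, of _ x] cp_subspace_props(2)[OF S, of _ y]
    by (simp add: algebra_simps inner_diff_left inner_add_left)
next
  fix c and x :: 'a
  show "closest_point S (c *\<^sub>R x) = c *\<^sub>R closest_point S x"
    apply (rule cp_subspace_char[OF S])
    using cp_subspace_props[OF S] S subspace_scale apply blast
    using cp_subspace_props(2)[OF S, of _ x]
    by (metis inner_diff_left inner_scaleR_left mult_zero_right scaleR_right_diff_distrib)
qed

lemma projm_apply:
  fixes S :: "(real^'n::finite) set"
  assumes "subspace S"
  shows "projm S *v x = closest_point S x"
  unfolding projm_def
  using matrix_works[OF cp_subspace_linear[OF assms, unfolded linear_matrix_vector_mul_eq[symmetric]]] .

lemma projm_inj:
  fixes S :: "(real^'n::finite) set"
  assumes "subspace S" "subspace T" "projm S = projm T"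
  shows "S = T"
proof -
  have cS: "S = {x. closest_point S x = x}"
    using closest_point_refl[OF closed_subspace[OF assms(1)]] assms(1) subspace_0 by blast
  have cT: "T = {x. closest_point T x = x}"
    using closest_point_refl[OF closed_subspace[OF assms(2)]] assms(2) subspace_0 by blast
  have "closest_point S x = closest_point T x" for x
    using projm_apply[OF assms(1), of x] projm_apply[OF assms(2), of x] assms(3) by simp
  then show ?thesis using cS cT by auto
qed

lemma range_projm:
  fixes S :: "(real^'n::finite) set"
  assumes "subspace S"
  shows "range (\<lambda>v. projm S *v v) = S"
proof
  show "range (\<lambda>v. projm S *v v) \<subseteq> S" using projm_apply[OF assms] cp_subspace_props(1)[OF assms] by auto
  show "S \<subseteq> range (\<lambda>v. projm S *v v)"
  proof
    fix x assume "x \<in> S"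
    then have "projm S *v x = x" using projm_apply[OF assms] closest_point_self by metis
    then show "x \<in> range (\<lambda>v. projm S *v v)" by (metis rangeI)
  qed
qed


(* ---- PI ---- *)
declare transpose_matrix_vector[simp del]

definition fro :: "real^'n::finite^'n \<Rightarrow> real" where
  "fro M = (\<Sum>a\<in>UNIV. \<Sum>b\<in>UNIV. (M$a$b)^2)"

definition Tf :: "real^'n::finite^'n \<Rightarrow> real^'n \<Rightarrow> real^'n" where
  "Tf M y = y - (1/(1 + fro M)) *\<^sub>R (M *v (transpose M *v y))"

lemma fro_nonneg: "fro M \<ge> 0"
  unfolding fro_def by (intro sum_nonneg) auto

lemma norm_sq_vec: "(norm (v::real^'n::finite))^2 = (\<Sum>a\<in>UNIV. (v$a)^2)"
proof -
  have "(norm v)^2 = inner v v" by (rule power2_norm_eq_inner)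
  then show ?thesis by (simp add: inner_vec_def power2_eq_square)
qed

lemma mv_bound: "(norm (M *v w))^2 \<le> fro M * (norm w)^2"
proof -
  have "(norm (M *v w))^2 = (\<Sum>a\<in>UNIV. (inner (M$a) w)^2)"
    unfolding norm_sq_vec by (simp add: matrix_vector_mult_def inner_vec_def)
  also have "\<dots> \<le> (\<Sum>a\<in>UNIV. (norm (M$a))^2 * (norm w)^2)"
  proof (rule sum_mono)
    fix a
    have "\<bar>inner (M$a) w\<bar> \<le> norm (M$a) * norm w" by (rule Cauchy_Schwarz_ineq2)
    then have "\<bar>inner (M$a) w\<bar>^2 \<le> (norm (M$a) * norm w)^2"
      by (intro power_mono) auto
    then show "(inner (M$a) w)^2 \<le> (norm (M$a))^2 * (norm w)^2"
      by (simp add: power_mult_distrib)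
  qed
  also have "\<dots> = fro M * (norm w)^2"
    unfolding fro_def norm_sq_vec by (simp add: sum_distrib_right)
  finally show ?thesis .
qed

lemma transpose_inner: fixes M :: "real^'n::finite^'m::finite" shows "inner (transpose M *v y) z = inner y (M *v (z::real^'n::finite))"
  by (simp add: dot_lmul_matrix transpose_matrix_vector)

lemma Tf_bound:
  "(norm (Tf M y))^2 \<le> (norm y)^2 - (1/(1+fro M)) * (norm (transpose M *v y))^2"
proof -
  define s where "s = 1/(1 + fro M)"
  define u where "u = transpose M *v y"
  have s0: "s > 0" "s * fro M \<le> 1" using fro_nonneg[of M] by (auto simp: s_def field_simps)
  have yu: "inner y (M *v u) = (norm u)^2"
    using transpose_inner[of M y u] by (simp add: u_def power2_norm_eq_inner)
  have "(norm (Tf M y))^2 = (norm y)^2 - 2 * s * inner y (M *v u) + s^2 * (norm (M *v u))^2"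
    unfolding Tf_def s_def[symmetric] u_def[symmetric]
    apply (simp only: power2_norm_eq_inner)
    by (simp add: inner_diff_left inner_diff_right algebra_simps power2_eq_square inner_commute)
  also have "\<dots> \<le> (norm y)^2 - 2 * s * (norm u)^2 + s^2 * (fro M * (norm u)^2)"
    using yu mv_bound[of M u] s0 by (simp add: mult_left_mono)
  also have "\<dots> \<le> (norm y)^2 - s * (norm u)^2"
  proof -
    have "s^2 * (fro M * (norm u)^2) = s * ((s * fro M) * (norm u)^2)" by (simp add: power2_eq_square algebra_simps)
    also have "\<dots> \<le> s * (1 * (norm u)^2)"
      using s0 by (intro mult_left_mono mult_right_mono) auto
    finally show ?thesis by simp
  qed
  finally show ?thesis by (simp add: s_def u_def)
qed

lemma transpose_zero_iff_orth:
  fixes M :: "real^'n::finite^'m::finite"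
  shows "transpose M *v w = 0 \<longleftrightarrow> (\<forall>z. inner w (M *v z) = 0)"
proof
  assume "transpose M *v w = 0" then show "\<forall>z. inner w (M *v z) = 0"
    using transpose_inner[of M w] by simp
next
  assume "\<forall>z. inner w (M *v z) = 0"
  then have "inner (transpose M *v w) (transpose M *v w) = 0" using transpose_inner[of M w] by simp
  then show "transpose M *v w = 0" by simp
qed

lemma lower_bound:
  fixes M :: "real^'n::finite^'n"
  shows "\<exists>c>0. \<forall>y \<in> range (\<lambda>v. M *v v). c * (norm y)^2 \<le> (norm (transpose M *v y))^2"
proof -
  let ?R = "range (\<lambda>v. M *v v)"
  have sub: "subspace ?R" by (intro linear_subspace_image[OF _ subspace_UNIV]) simp
  have nz: "transpose M *v y \<noteq> 0" if yR: "y \<in> ?R" and yn: "y \<noteq> 0" for y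
  proof
    assume "transpose M *v y = 0"
    then have "\<forall>z. inner y (M *v z) = 0" using transpose_zero_iff_orth by blast
    moreover obtain z where "y = M *v z" using yR by auto
    ultimately have "inner y y = 0" by auto
    then show False using yn by simp
  qed
  show ?thesis
  proof (cases "?R \<inter> sphere 0 1 = {}")
    case True
    have "y = 0" if "y \<in> ?R" for y
    proof (rule ccontr)
      assume "y \<noteq> 0"
      then have "(1/norm y) *\<^sub>R y \<in> ?R \<inter> sphere 0 1"
        using that subspace_scale[OF sub] by auto
      then show False using True by blast
    qed
    then have "\<forall>y \<in> ?R. 1 * (norm y)^2 \<le> (norm (transpose M *v y))^2"
    proof (intro ballI)
      fix y assume "y \<in> ?R" "\<And>y. y \<in> ?R \<Longrightarrow> y = 0"
      then have "y = 0" by blast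
      then show "1 * (norm y)^2 \<le> (norm (transpose M *v y))^2" by simp
    qed
    then show ?thesis by (intro exI[of _ 1]) simp
  next
    case False
    have cpt: "compact (?R \<inter> sphere 0 1)"
      using closed_subspace[OF sub] by (intro closed_Int_compact) auto
    have cont: "continuous_on (?R \<inter> sphere 0 1) (\<lambda>y. (norm (transpose M *v y))^2)"
      by (intro continuous_intros linear_continuous_on)
    obtain y0 where y0: "y0 \<in> ?R \<inter> sphere 0 1"
      and min: "\<And>y. y \<in> ?R \<inter> sphere 0 1 \<Longrightarrow> (norm (transpose M *v y0))^2 \<le> (norm (transpose M *v y))^2"
      using continuous_attains_inf[OF cpt False cont] by blast
    define c where "c = (norm (transpose M *v y0))^2"
    have "y0 \<noteq> 0" using y0 by auto
    then have "transpose M *v y0 \<noteq> 0" using nz y0 by blast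
    then have c0: "c > 0" by (simp add: c_def)
    have "c * (norm y)^2 \<le> (norm (transpose M *v y))^2" if y: "y \<in> ?R" for y
    proof (cases "y = 0")
      case True then show ?thesis by simp
    next
      case False
      let ?y = "(1/norm y) *\<^sub>R y"
      have "?y \<in> ?R \<inter> sphere 0 1" using y False subspace_scale[OF sub] by auto
      then have "c \<le> (norm (transpose M *v ?y))^2" using min c_def by auto
      also have "\<dots> = (norm (transpose M *v y))^2 / (norm y)^2"
        by (simp add: matrix_vector_mult_scaleR power_divide)
      finally show ?thesis using False by (simp add: field_simps)
    qed
    then show ?thesis using c0 by blast
  qed
qed

lemma Tf_add: "Tf M (a + b) = Tf M a + Tf M b"
  unfolding Tf_def by (simp add: algebra_simps)

lemma Tf_range:
  assumes "y \<in> range (\<lambda>v. M *v v)"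
  shows "Tf M y \<in> range (\<lambda>v. M *v v)"
proof -
  obtain z where z: "y = M *v z" using assms by auto
  have "Tf M y = M *v (z - (1/(1 + fro M)) *\<^sub>R (transpose M *v y))"
    unfolding Tf_def z by (simp add: algebra_simps)
  then show ?thesis by auto
qed

lemma Tf_orth:
  assumes "\<And>z. inner w (M *v z) = 0"
  shows "Tf M w = w"
proof -
  have "transpose M *v w = 0" using assms transpose_zero_iff_orth by blast
  then show ?thesis unfolding Tf_def by simp
qed

lemma Tf_contract:
  fixes M :: "real^'n::finite^'n"
  shows "\<exists>q. 0 \<le> q \<and> q < 1 \<and> (\<forall>y\<in>range (\<lambda>v. M *v v). (norm (Tf M y))^2 \<le> q * (norm y)^2)"
proof -
  obtain c where c: "c > 0" "\<And>y. y \<in> range (\<lambda>v. M *v v) \<Longrightarrow> c * (norm y)^2 \<le> (norm (transpose M *v y))^2"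
    using lower_bound[of M] by blast
  define s where "s = 1/(1 + fro M)"
  have s: "0 < s" "s \<le> 1" using fro_nonneg[of M] by (auto simp: s_def field_simps)
  define c' where "c' = min c 1"
  have c': "0 < c'" "c' \<le> 1" "c' \<le> c" using c by (auto simp: c'_def)
  define q where "q = 1 - s * c'"
  have q: "0 \<le> q" "q < 1"
    using s c' mult_mono[of s 1 c' 1] by (auto simp: q_def)
  have "(norm (Tf M y))^2 \<le> q * (norm y)^2" if y: "y \<in> range (\<lambda>v. M *v v)" for y
  proof -
    have "(norm (Tf M y))^2 \<le> (norm y)^2 - s * (norm (transpose M *v y))^2"
      using Tf_bound[of M y] by (simp add: s_def)
    also have "\<dots> \<le> (norm y)^2 - s * (c' * (norm y)^2)"
      using c(2)[OF y] c' s mult_right_mono[of c' c "(norm y)^2"]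
      by (intro diff_left_mono mult_left_mono) auto
    also have "\<dots> = q * (norm y)^2" by (simp add: q_def algebra_simps)
    finally show ?thesis .
  qed
  then show ?thesis using q by blast
qed

lemma iter_decay:
  fixes M :: "real^'n::finite^'n"
  assumes y: "y \<in> range (\<lambda>v. M *v v)"
  shows "(\<lambda>k. (Tf M ^^ k) y) \<longlonglongrightarrow> 0"
proof -
  obtain q where q: "0 \<le> q" "q < 1" "\<And>y. y \<in> range (\<lambda>v. M *v v) \<Longrightarrow> (norm (Tf M y))^2 \<le> q * (norm y)^2"
    using Tf_contract[of M] by blast
  have inR: "(Tf M ^^ k) y \<in> range (\<lambda>v. M *v v)" for k
    by (induction k) (use y Tf_range in auto)
  have bd: "(norm ((Tf M ^^ k) y))^2 \<le> q^k * (norm y)^2" for k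
  proof (induction k)
    case 0 then show ?case by simp
  next
    case (Suc k)
    have "(norm ((Tf M ^^ Suc k) y))^2 \<le> q * (norm ((Tf M ^^ k) y))^2"
      using q(3)[OF inR[of k]] by simp
    also have "\<dots> \<le> q * (q^k * (norm y)^2)" using Suc q(1) by (intro mult_left_mono) auto
    finally show ?case by (simp add: algebra_simps)
  qed
  have lim: "(\<lambda>k. q^k * (norm y)^2) \<longlonglongrightarrow> 0"
    using LIMSEQ_power_zero[of q] q by (intro tendsto_mult_left_zero) auto
  have "(\<lambda>k. (norm ((Tf M ^^ k) y))^2) \<longlonglongrightarrow> 0"
    by (rule tendsto_sandwich[of "\<lambda>_. 0" _ _ "\<lambda>k. q^k * (norm y)^2"]) (use bd lim in auto)
  then have "(\<lambda>k. sqrt ((norm ((Tf M ^^ k) y))^2)) \<longlonglongrightarrow> sqrt 0"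
    by (intro tendsto_intros)
  then have "(\<lambda>k. norm ((Tf M ^^ k) y)) \<longlonglongrightarrow> 0" by simp
  then show ?thesis using tendsto_norm_zero_iff by blast
qed

lemma pit_lim:
  fixes M :: "real^'n::finite^'n"
  shows "(\<lambda>k. x - (Tf M ^^ k) x) \<longlonglongrightarrow> closest_point (range (\<lambda>v. M *v v)) x"
proof -
  let ?R = "range (\<lambda>v. M *v v)"
  have sub: "subspace ?R" by (intro linear_subspace_image[OF _ subspace_UNIV]) simp
  define u where "u = closest_point ?R x"
  define w where "w = x - u"
  have uR: "u \<in> ?R" using cp_subspace_props(1)[OF sub] u_def by blast
  have wo: "inner w (M *v z) = 0" for z using cp_subspace_props(2)[OF sub, of "M *v z" x] by (auto simp: u_def w_def)
  have Tw: "Tf M w = w" using Tf_orth wo by blast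
  have split: "(Tf M ^^ k) (a + w) = (Tf M ^^ k) a + w" for k a
    by (induction k) (auto simp: Tf_add Tw)
  have "x = u + w" by (simp add: w_def)
  then have eq: "x - (Tf M ^^ k) x = u - (Tf M ^^ k) u" for k
    using split[of k u] by simp
  have "(\<lambda>k. u - (Tf M ^^ k) u) \<longlonglongrightarrow> u - 0"
    using iter_decay[OF uR] by (intro tendsto_intros)
  then show ?thesis unfolding eq u_def by simp
qed


(* ---- Meas ---- *)

lemma vec_measurableI:
  fixes f :: "'b \<Rightarrow> 'a::euclidean_space^'n::finite"
  assumes "\<And>i. (\<lambda>x. f x $ i) \<in> borel_measurable N"
  shows "f \<in> borel_measurable N"
proof (subst borel_measurable_euclidean_space, intro ballI)
  fix b :: "'a^'n" assume "b \<in> Basis"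
  then obtain i u where b: "b = axis i u" "u \<in> Basis" by (auto simp: Basis_vec_def)
  have "(\<lambda>x. f x $ i \<bullet> u) \<in> borel_measurable N"
    using assms[of i] by measurable
  then show "(\<lambda>x. f x \<bullet> b) \<in> borel_measurable N" by (simp add: b inner_axis)
qed

lemma vec_nth_measurable[measurable (raw)]:
  fixes f :: "'b \<Rightarrow> 'a::euclidean_space^'n::finite"
  assumes "f \<in> borel_measurable N"
  shows "(\<lambda>x. f x $ i) \<in> borel_measurable N"
proof -
  have "(\<lambda>v::'a^'n. v $ i) \<in> borel_measurable borel"
    by (intro borel_measurable_continuous_onI continuous_intros)
  then show ?thesis using measurable_compose[OF assms] by blast
qed

lemma mv_measurable[measurable (raw)]:
  fixes f :: "'b \<Rightarrow> real^'n::finite^'m::finite" and g :: "'b \<Rightarrow> real^'n"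
  assumes [measurable]: "f \<in> borel_measurable N" "g \<in> borel_measurable N"
  shows "(\<lambda>x. f x *v g x) \<in> borel_measurable N"
  by (intro vec_measurableI) (simp add: matrix_vector_mult_def)

lemma mm_measurable[measurable (raw)]:
  fixes f :: "'b \<Rightarrow> real^'n::finite^'m::finite" and g :: "'b \<Rightarrow> real^'k::finite^'n"
  assumes [measurable]: "f \<in> borel_measurable N" "g \<in> borel_measurable N"
  shows "(\<lambda>x. f x ** g x) \<in> borel_measurable N"
  by (intro vec_measurableI) (simp add: matrix_matrix_mult_def)

lemma transpose_measurable[measurable (raw)]:
  fixes f :: "'b \<Rightarrow> real^'n::finite^'m::finite"
  assumes [measurable]: "f \<in> borel_measurable N"
  shows "(\<lambda>x. transpose (f x)) \<in> borel_measurable N"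
  by (intro vec_measurableI) (simp add: transpose_def)

lemma fro_measurable[measurable (raw)]:
  fixes f :: "'b \<Rightarrow> real^'n::finite^'n"
  assumes [measurable]: "f \<in> borel_measurable N"
  shows "(\<lambda>x. fro (f x)) \<in> borel_measurable N"
  unfolding fro_def by measurable

lemma Tf_iter_measurable:
  fixes f :: "'b \<Rightarrow> real^'n::finite^'n"
  assumes [measurable]: "f \<in> borel_measurable N"
  shows "(\<lambda>x. (Tf (f x) ^^ k) y) \<in> borel_measurable N"
proof (induction k)
  case 0 then show ?case by simp
next
  case (Suc k)
  define g where "g = (\<lambda>x. (Tf (f x) ^^ k) y)"
  have [measurable]: "g \<in> borel_measurable N" using Suc by (simp add: g_def)
  have "(\<lambda>x. Tf (f x) (g x)) \<in> borel_measurable N" unfolding Tf_def by measurable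
  then show ?case by (simp add: g_def)
qed

lemma projm_range_measurable:
  fixes f :: "'b \<Rightarrow> real^'n::finite^'n"
  assumes [measurable]: "f \<in> borel_measurable N"
  shows "(\<lambda>x. projm (range (\<lambda>v. f x *v v))) \<in> borel_measurable N"
proof (intro vec_measurableI)
  fix a b
  have lim: "(\<lambda>k. (axis b 1 - (Tf (f x) ^^ k) (axis b 1)) $ a) \<longlonglongrightarrow> projm (range (\<lambda>v. f x *v v)) $ a $ b" for x
  proof -
    have "projm (range (\<lambda>v. f x *v v)) $ a $ b = closest_point (range (\<lambda>v. f x *v v)) (axis b 1) $ a"
      by (simp add: projm_def matrix_def)
    moreover have "(\<lambda>k. (axis b 1 - (Tf (f x) ^^ k) (axis b 1)) $ a) \<longlonglongrightarrow> closest_point (range (\<lambda>v. f x *v v)) (axis b 1) $ a"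
      by (rule tendsto_vec_nth[OF pit_lim])
    ultimately show ?thesis by simp
  qed
  have "(\<lambda>x. (axis b 1 - (Tf (f x) ^^ k) (axis b 1)) $ a) \<in> borel_measurable N" for k
    using Tf_iter_measurable[of f N k "axis b 1"] by measurable
  then show "(\<lambda>x. projm (range (\<lambda>v. f x *v v)) $ a $ b) \<in> borel_measurable N"
    by (rule borel_measurable_LIMSEQ_metric) (use lim in auto)
qed

lemma det_measurable[measurable]:
  "(det :: real^'n::finite^'n \<Rightarrow> real) \<in> borel_measurable borel"
  unfolding det_def by measurable


(* ---- Flag ---- *)

lemma flags_sub:
  fixes G :: "'n::finite flag"
  shows "G \<in> flags \<Longrightarrow> j \<le> CARD('n) \<Longrightarrow> subspace (G j)"
  unfolding flags_def by blast

lemma flags_empty: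
  fixes G :: "'n::finite flag"
  shows "G \<in> flags \<Longrightarrow> j > CARD('n) \<Longrightarrow> G j = {}"
  unfolding flags_def by blast

lemma space_flagM: "space (flagM :: 'n::finite flag measure) = flags"
  by (simp add: flagM_def)

lemma space_flag_iM: "space (flag_iM i :: 'n::finite flag measure) = flags_i i"
  by (simp add: flag_iM_def)

lemma Phi_meas:
  assumes "j \<le> CARD('n::finite)"
  shows "(\<lambda>G::'n flag. projm (G j)) \<in> borel_measurable flagM"
proof -
  let ?Phi = "\<lambda>G::'n flag. restrict (\<lambda>j. projm (G j)) {..CARD('n)}"
  have "?Phi \<in> flagM \<rightarrow>\<^sub>M PiM {..CARD('n)} (\<lambda>_. borel)"
    unfolding flagM_def by (rule measurable_vimage_algebra1) (simp add: space_PiM)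
  moreover have "j \<in> {..CARD('n)}" using assms by simp
  ultimately have "(\<lambda>G. ?Phi G j) \<in> borel_measurable flagM"
    by (rule measurable_compose[OF _ measurable_component_singleton])
  then show ?thesis using assms by simp
qed

lemma flagM_measurableI:
  fixes g :: "'b \<Rightarrow> 'n::finite flag"
  assumes "g \<in> space N \<rightarrow> flags" "\<And>j. j \<le> CARD('n) \<Longrightarrow> (\<lambda>x. projm (g x j)) \<in> borel_measurable N"
  shows "g \<in> N \<rightarrow>\<^sub>M flagM"
  unfolding flagM_def
proof (rule measurable_vimage_algebra2[OF assms(1)])
  show "(\<lambda>x. restrict (\<lambda>j. projm (g x j)) {..CARD('n)}) \<in> N \<rightarrow>\<^sub>M PiM {..CARD('n)} (\<lambda>_. borel)"
    by (rule measurable_restrict) (use assms(2) in simp)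
qed

lemma flags_eqI:
  fixes G G' :: "'n::finite flag"
  assumes "G \<in> flags" "G' \<in> flags" "\<And>j. j \<le> CARD('n) \<Longrightarrow> projm (G j) = projm (G' j)"
  shows "G = G'"
proof
  fix j show "G j = G' j"
  proof (cases "j \<le> CARD('n)")
    case True show ?thesis by (rule projm_inj[OF flags_sub[OF assms(1) True] flags_sub[OF assms(2) True] assms(3)[OF True]])
  next
    case False then show ?thesis using flags_empty[OF assms(1)] flags_empty[OF assms(2)] by simp
  qed
qed

lemma singleton_flagM:
  assumes "G \<in> space (flagM :: 'n::finite flag measure)"
  shows "{G} \<in> sets (flagM :: 'n flag measure)"
proof -
  have "{G} = {G' \<in> space flagM. \<forall>j\<in>{..CARD('n)}. projm (G' j) = projm (G j)}"
  proof (rule set_eqI, rule iffI)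
    fix G' assume "G' \<in> {G}" then show "G' \<in> {G' \<in> space flagM. \<forall>j\<in>{..CARD('n)}. projm (G' j) = projm (G j)}"
      using assms by simp
  next
    fix G' assume G': "G' \<in> {G' \<in> space flagM. \<forall>j\<in>{..CARD('n)}. projm (G' j) = projm (G j)}"
    have "G' = G" by (rule flags_eqI) (use G' assms in \<open>simp_all add: space_flagM\<close>)
    then show "G' \<in> {G}" by simp
  qed
  also have "\<dots> \<in> sets flagM"
  proof (rule sets.sets_Collect_finite_All)
    fix j :: nat assume "j \<in> {..CARD('n)}"
    then have "(\<lambda>G'::'n flag. projm (G' j)) \<in> borel_measurable flagM" by (intro Phi_meas) simp
    then show "{G' \<in> space flagM. projm (G' j) = projm (G j)} \<in> sets flagM"
      by (rule measurable_equality_set) simp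
  qed simp
  finally show ?thesis .
qed

lemma diag_flagM:
  "Sigma (space flagM) (\<lambda>G. {G}) \<in> sets ((flagM :: 'n::finite flag measure) \<Otimes>\<^sub>M flagM)"
proof -
  have "Sigma (space flagM) (\<lambda>G. {G}) =
      {z \<in> space ((flagM :: 'n flag measure) \<Otimes>\<^sub>M flagM). \<forall>j\<in>{..CARD('n)}. projm (fst z j) = projm (snd z j)}"
  proof (rule set_eqI, rule iffI)
    fix z :: "'n flag \<times> 'n flag" assume "z \<in> Sigma (space flagM) (\<lambda>G. {G})"
    then show "z \<in> {z \<in> space ((flagM :: 'n flag measure) \<Otimes>\<^sub>M flagM). \<forall>j\<in>{..CARD('n)}. projm (fst z j) = projm (snd z j)}"
      by (auto simp: space_pair_measure)
  next
    fix z :: "'n flag \<times> 'n flag" assume z: "z \<in> {z \<in> space ((flagM :: 'n flag measure) \<Otimes>\<^sub>M flagM). \<forall>j\<in>{..CARD('n)}. projm (fst z j) = projm (snd z j)}"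
    obtain a b where ab: "z = (a, b)" by (cases z)
    have "a = b" by (rule flags_eqI) (use z in \<open>simp_all add: ab space_pair_measure space_flagM\<close>)
    then show "z \<in> Sigma (space flagM) (\<lambda>G. {G})" using z by (simp add: ab space_pair_measure)
  qed
  also have "\<dots> \<in> sets (flagM \<Otimes>\<^sub>M flagM)"
  proof (rule sets.sets_Collect_finite_All)
    fix j :: nat assume "j \<in> {..CARD('n)}"
    then have "(\<lambda>G'::'n flag. projm (G' j)) \<in> borel_measurable flagM" by (intro Phi_meas) simp
    then have "(\<lambda>z::'n flag \<times> 'n flag. projm (fst z j)) \<in> borel_measurable (flagM \<Otimes>\<^sub>M flagM)"
      "(\<lambda>z::'n flag \<times> 'n flag. projm (snd z j)) \<in> borel_measurable (flagM \<Otimes>\<^sub>M flagM)"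
      by (auto intro: measurable_compose[OF measurable_fst] measurable_compose[OF measurable_snd])
    then show "{z \<in> space ((flagM :: 'n flag measure) \<Otimes>\<^sub>M flagM). projm (fst z j) = projm (snd z j)} \<in> sets (flagM \<Otimes>\<^sub>M flagM)"
      by (rule measurable_equality_set)
  qed simp
  finally show ?thesis .
qed

lemma flag_i_meas[measurable]: "flag_i i \<in> (flagM :: 'n::finite flag measure) \<rightarrow>\<^sub>M flag_iM i"
proof -
  have a: "flag_i i \<in> space flagM \<rightarrow> flags_i i" unfolding space_flagM flags_i_def by blast
  have "(\<lambda>x. \<lambda>j\<in>{..CARD('n)} - {i}. projm (flag_i i x j)) \<in> (flagM :: 'n flag measure) \<rightarrow>\<^sub>M PiM ({..CARD('n)} - {i}) (\<lambda>_. borel)"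
  proof (rule measurable_restrict)
    fix j assume j: "j \<in> {..CARD('n)} - {i}"
    then have "(\<lambda>x::'n flag. projm (x j)) \<in> borel_measurable flagM" by (intro Phi_meas) simp
    then show "(\<lambda>x::'n flag. projm (flag_i i x j)) \<in> borel_measurable flagM"
      using j by (simp add: flag_i_def)
  qed
  then show ?thesis unfolding flag_iM_def by (rule measurable_vimage_algebra2[OF a])
qed

lemma act_flags:
  fixes A :: "real^'n::finite^'n" and G :: "'n flag"
  assumes A: "invertible A" and G: "G \<in> flags"
  shows "act A G \<in> flags"
proof -
  have inj: "inj ((*v) A)" using inj_matrix_vector_mult[OF A] .
  have "subspace (act A G j) \<and> dim (act A G j) = j" if "j \<le> CARD('n)" for j
  proof -
    have "subspace (G j)" "dim (G j) = j" using G that by (auto simp: flags_def)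
    moreover have "dim ((*v) A ` G j) = dim (G j)"
      by (rule dim_image_eq) (use inj in \<open>auto simp: inj_on_def inj_def\<close>)
    ultimately show ?thesis unfolding act_def
      by (simp add: linear_subspace_image)
  qed
  moreover have "act A G j \<subseteq> act A G (Suc j)" if "j < CARD('n)" for j
    using G that unfolding act_def flags_def by auto
  moreover have "act A G j = {}" if "j > CARD('n)" for j
    using G that unfolding act_def flags_def by auto
  ultimately show ?thesis unfolding flags_def by auto
qed

lemma act_inj:
  fixes A :: "real^'n::finite^'n" and G G' :: "'n flag"
  assumes A: "invertible A" and eq: "act A G = act A G'"
  shows "G = G'"
proof
  fix j
  have "(*v) A ` G j = (*v) A ` G' j" using eq unfolding act_def by metis
  then show "G j = G' j" using inj_matrix_vector_mult[OF A] by (simp add: inj_image_eq_iff)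
qed

lemma projm_act:
  fixes A :: "real^'n::finite^'n" and G :: "'n flag"
  assumes "G \<in> flags" "j \<le> CARD('n)"
  shows "projm (act A G j) = projm (range (\<lambda>v. (A ** projm (G j)) *v v))"
proof -
  have "act A G j = (*v) A ` range (\<lambda>v. projm (G j) *v v)"
    using range_projm[OF flags_sub[OF assms]] by (simp add: act_def)
  also have "\<dots> = range (\<lambda>v. (A ** projm (G j)) *v v)"
    by (auto simp: matrix_vector_mul_assoc[symmetric] image_iff)
  finally show ?thesis by simp
qed

definition actp :: "(real^'n::finite^'n) \<times> 'n flag \<Rightarrow> 'n flag" where
  "actp z = (if invertible (fst z) then act (fst z) (snd z) else snd z)"

lemma actp_meas[measurable]: "actp \<in> (borel \<Otimes>\<^sub>M (flagM :: 'n::finite flag measure)) \<rightarrow>\<^sub>M flagM"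
proof (rule flagM_measurableI)
  show "actp \<in> space (borel \<Otimes>\<^sub>M flagM) \<rightarrow> flags"
    by (auto simp: actp_def space_pair_measure space_flagM act_flags)
  fix j assume j: "j \<le> CARD('n)"
  have [measurable]: "(\<lambda>z::(real^'n^'n) \<times> 'n flag. projm (snd z j)) \<in> borel_measurable (borel \<Otimes>\<^sub>M flagM)"
    by (rule measurable_compose[OF measurable_snd Phi_meas[OF j]])
  have inv: "{z \<in> space (borel \<Otimes>\<^sub>M (flagM :: 'n flag measure)). invertible (fst z :: real^'n^'n)}
     = {z \<in> space (borel \<Otimes>\<^sub>M (flagM :: 'n flag measure)). det (fst z) \<noteq> 0}"
    by (simp add: invertible_det_nz)
  have m1: "(\<lambda>z::(real^'n^'n) \<times> 'n flag. projm (range (\<lambda>v. (fst z ** projm (snd z j)) *v v))) \<in> borel_measurable (borel \<Otimes>\<^sub>M flagM)"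
    by (rule projm_range_measurable) measurable
  have m2: "(\<lambda>z::(real^'n^'n) \<times> 'n flag. projm (snd z j)) \<in> borel_measurable (borel \<Otimes>\<^sub>M flagM)"
    by measurable
  have meas_if: "(\<lambda>z::(real^'n^'n) \<times> 'n flag. if invertible (fst z) then projm (range (\<lambda>v. (fst z ** projm (snd z j)) *v v)) else projm (snd z j))
        \<in> borel_measurable (borel \<Otimes>\<^sub>M flagM)"
    apply (rule measurable_If[OF m1 m2])
    unfolding inv by measurable
  have eq: "\<And>z::(real^'n^'n) \<times> 'n flag. z \<in> space (borel \<Otimes>\<^sub>M flagM) \<Longrightarrow> projm (actp z j) = (if invertible (fst z) then projm (range (\<lambda>v. (fst z ** projm (snd z j)) *v v)) else projm (snd z j))"
    using j by (auto simp: actp_def space_pair_measure space_flagM projm_act)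
  show "(\<lambda>z::(real^'n^'n) \<times> 'n flag. projm (actp z j)) \<in> borel_measurable (borel \<Otimes>\<^sub>M flagM)"
    by (rule measurable_cong[THEN iffD2, OF eq meas_if])
qed

lemma act_meas:
  assumes "invertible A"
  shows "act A \<in> (flagM :: 'n::finite flag measure) \<rightarrow>\<^sub>M flagM"
proof -
  have "(\<lambda>G. actp (A, G)) \<in> (flagM :: 'n flag measure) \<rightarrow>\<^sub>M flagM" by measurable
  then show ?thesis using assms by (simp add: actp_def)
qed


(* ---- Trunc ---- *)

lemma ennreal_le_maxI: "a \<le> max 0 b \<Longrightarrow> ennreal a \<le> ennreal b"
proof (cases "a \<le> 0")
  case True then have "ennreal a = 0" by (rule ennreal_neg)
  then show ?thesis by simp
next
  case False
  assume "a \<le> max 0 b"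
  with False have "a \<le> b" by linarith
  then show ?thesis by (rule ennreal_leI)
qed

lemma trunc_le1: "min (y::real) t - min x t \<le> max 0 (y - x)"
  unfolding min_def max_def by auto

lemma trunc_le2: "(t::real) \<le> s \<Longrightarrow> min (y::real) t - min x t \<le> max 0 (min y s - min x s)"
  unfolding min_def max_def by auto

lemma sup_trunc:
  fixes x y :: real
  shows "(SUP n::nat. ennreal (min y (real n) - min x (real n))) = ennreal (y - x)"
proof (rule antisym)
  show "(SUP n::nat. ennreal (min y (real n) - min x (real n))) \<le> ennreal (y - x)"
  proof (rule SUP_least)
    fix n :: nat
    show "ennreal (min y (real n) - min x (real n)) \<le> ennreal (y - x)"
      by (rule ennreal_le_maxI) (rule trunc_le1)
  qed
next
  obtain n :: nat where n: "max x y < real n" using reals_Archimedean2[of "max x y"] by (elim exE)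
  then have "min y (real n) = y" "min x (real n) = x" by (simp_all add: min_def)
  then have "ennreal (min y (real n) - min x (real n)) = ennreal (y - x)" by (simp only:)
  then show "ennreal (y - x) \<le> (SUP n::nat. ennreal (min y (real n) - min x (real n)))"
    by (intro SUP_upper2[of n]) simp_all
qed

lemma incseq_trunc:
  fixes x y :: real
  shows "incseq (\<lambda>n::nat. ennreal (min y (real n) - min x (real n)))"
proof (rule incseq_SucI)
  fix n :: nat
  show "ennreal (min y (real n) - min x (real n)) \<le> ennreal (min y (real (Suc n)) - min x (real (Suc n)))"
    by (rule ennreal_le_maxI, rule trunc_le2) simp
qed

lemma trunc_ineq:
  fixes P :: "'a measure" and X Y :: "'a \<Rightarrow> real"
  assumes P: "prob_space P"
    and X[measurable]: "X \<in> borel_measurable P" and Y[measurable]: "Y \<in> borel_measurable P"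
    and nn: "\<And>w. w \<in> space P \<Longrightarrow> 0 \<le> X w" "\<And>w. w \<in> space P \<Longrightarrow> 0 \<le> Y w"
    and eqd: "distr P borel X = distr P borel Y"
  shows "(\<integral>\<^sup>+w. ennreal (Y w - X w) \<partial>P) \<le> (\<integral>\<^sup>+w. ennreal (X w - Y w) \<partial>P)"
proof -
  interpret prob_space P by fact
  define f where "f = (\<lambda>(n::nat) w. ennreal (min (Y w) (real n) - min (X w) (real n)))"
  define g where "g = (\<lambda>(n::nat) w. ennreal (min (X w) (real n) - min (Y w) (real n)))"
  have fg: "(\<integral>\<^sup>+w. f n w \<partial>P) = (\<integral>\<^sup>+w. g n w \<partial>P)" for n
  proof -
    define Z where "Z = (\<lambda>w. min (X w) (real n) - min (Y w) (real n))"
    have [measurable]: "Z \<in> borel_measurable P" unfolding Z_def by measurable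
    have bZ: "\<And>w. w \<in> space P \<Longrightarrow> norm (Z w) \<le> real n"
      using nn unfolding Z_def min_def by fastforce
    have intX: "integrable P (\<lambda>w. min (X w) (real n))"
      by (rule integrable_const_bound[where B="real n"]) (use nn in \<open>auto simp: min_def\<close>)
    have intY: "integrable P (\<lambda>w. min (Y w) (real n))"
      by (rule integrable_const_bound[where B="real n"]) (use nn in \<open>auto simp: min_def\<close>)
    have "integral\<^sup>L P (\<lambda>w. min (X w) (real n)) = integral\<^sup>L (distr P borel X) (\<lambda>x. min x (real n))"
      by (rule integral_distr[symmetric]) auto
    also have "\<dots> = integral\<^sup>L (distr P borel Y) (\<lambda>x. min x (real n))" by (simp add: eqd)
    also have "\<dots> = integral\<^sup>L P (\<lambda>w. min (Y w) (real n))"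
      by (rule integral_distr) auto
    finally have eqi: "integral\<^sup>L P (\<lambda>w. min (X w) (real n)) = integral\<^sup>L P (\<lambda>w. min (Y w) (real n))" .
    have intZ: "integrable P Z" unfolding Z_def using intX intY by simp
    have "AE w in P. norm (max 0 (Z w)) \<le> real n"
      by (rule AE_I2) (use bZ in force)
    then have intZp: "integrable P (\<lambda>w. max 0 (Z w))"
      by (rule integrable_const_bound) measurable
    have "AE w in P. norm (max 0 (- Z w)) \<le> real n"
      by (rule AE_I2) (use bZ in force)
    then have intZm: "integrable P (\<lambda>w. max 0 (- Z w))"
      by (rule integrable_const_bound) measurable
    have "integral\<^sup>L P Z = 0" unfolding Z_def using intX intY eqi by simp
    moreover have "integral\<^sup>L P Z = integral\<^sup>L P (\<lambda>w. max 0 (Z w)) - integral\<^sup>L P (\<lambda>w. max 0 (- Z w))"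
    proof -
      have "integral\<^sup>L P (\<lambda>w. max 0 (Z w) - max 0 (- Z w)) = integral\<^sup>L P (\<lambda>w. max 0 (Z w)) - integral\<^sup>L P (\<lambda>w. max 0 (- Z w))"
        using intZp intZm by simp
      moreover have "(\<lambda>w. max 0 (Z w) - max 0 (- Z w)) = Z" by (auto simp: max_def)
      ultimately show ?thesis by simp
    qed
    ultimately have eq0: "integral\<^sup>L P (\<lambda>w. max 0 (Z w)) = integral\<^sup>L P (\<lambda>w. max 0 (- Z w))" by simp
    have "(\<integral>\<^sup>+w. g n w \<partial>P) = (\<integral>\<^sup>+w. ennreal (max 0 (Z w)) \<partial>P)"
      by (rule nn_integral_cong) (simp add: g_def Z_def ennreal_max_0)
    also have "\<dots> = ennreal (integral\<^sup>L P (\<lambda>w. max 0 (Z w)))"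
      by (rule nn_integral_eq_integral[OF intZp]) auto
    also have "\<dots> = ennreal (integral\<^sup>L P (\<lambda>w. max 0 (- Z w)))" by (simp add: eq0)
    also have "\<dots> = (\<integral>\<^sup>+w. ennreal (max 0 (- Z w)) \<partial>P)"
      by (rule nn_integral_eq_integral[OF intZm, symmetric]) auto
    also have "\<dots> = (\<integral>\<^sup>+w. f n w \<partial>P)"
      by (rule nn_integral_cong) (simp add: f_def Z_def ennreal_max_0)
    finally show ?thesis by simp
  qed
  have gle: "(\<integral>\<^sup>+w. g n w \<partial>P) \<le> (\<integral>\<^sup>+w. ennreal (X w - Y w) \<partial>P)" for n
    unfolding g_def by (rule nn_integral_mono) (rule ennreal_le_maxI, rule trunc_le1)
  have "(\<integral>\<^sup>+w. ennreal (Y w - X w) \<partial>P) = (\<integral>\<^sup>+w. (SUP n. f n w) \<partial>P)"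
    by (simp add: f_def sup_trunc)
  also have "\<dots> = (SUP n. \<integral>\<^sup>+w. f n w \<partial>P)"
  proof (rule nn_integral_monotone_convergence_SUP)
    show "incseq f" using incseq_trunc by (auto simp: incseq_def le_fun_def f_def)
    show "\<And>i. f i \<in> borel_measurable P" unfolding f_def by measurable
  qed
  also have "\<dots> \<le> (\<integral>\<^sup>+w. ennreal (X w - Y w) \<partial>P)"
    by (rule SUP_least) (simp add: fg gle)
  finally show ?thesis .
qed


(* ---- Stat ---- *)

lemma stationaryD:
  assumes "stationary \<mu> N"
  shows "prob_space N" "sets N = sets flagM"
    "\<And>E. E \<in> sets flagM \<Longrightarrow> emeasure N E = (\<integral>\<^sup>+ A. emeasure N {F \<in> space flagM. act A F \<in> E} \<partial>\<mu>)"
  using assms unfolding stationary_def by auto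

lemma restr_stationary:
  fixes \<mu> :: "(real^'n::finite^'n) measure" and \<nu> :: "'n flag measure" and S :: "'n flag set"
  assumes st: "stationary \<mu> \<nu>"
    and mu_prob: "prob_space \<mu>" and mu_sets: "sets \<mu> = sets borel"
    and inv: "AE A in \<mu>. invertible A"
    and S[measurable]: "S \<in> sets flagM" and pos: "measure \<nu> S > 0"
    and null: "emeasure (\<mu> \<Otimes>\<^sub>M \<nu>) {z \<in> space (borel \<Otimes>\<^sub>M flagM). (snd z \<in> S) \<noteq> (actp z \<in> S)} = 0"
  shows "stationary \<mu> (density \<nu> (\<lambda>F. ennreal (1 / measure \<nu> S) * indicator S F))"
proof -
  interpret nu: prob_space \<nu> using stationaryD(1)[OF st] .
  interpret mu: prob_space \<mu> by fact
  interpret pair_sigma_finite \<mu> \<nu> by unfold_locales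
  have sets_nu: "sets \<nu> = sets flagM" using stationaryD(2)[OF st] .
  have space_nu: "space \<nu> = space flagM" using sets_eq_imp_space_eq[OF sets_nu] .
  have sets_pair: "sets (\<mu> \<Otimes>\<^sub>M \<nu>) = sets (borel \<Otimes>\<^sub>M flagM)"
    by (rule sets_pair_measure_cong[OF mu_sets sets_nu])
  have space_pair: "space (\<mu> \<Otimes>\<^sub>M \<nu>) = space (borel \<Otimes>\<^sub>M (flagM :: 'n flag measure))"
    using sets_eq_imp_space_eq[OF sets_pair] .
  define p where "p = measure \<nu> S"
  define c where "c = ennreal (1 / p)"
  define N1 where "N1 = density \<nu> (\<lambda>F. c * indicator S F)"
  have S_nu: "S \<in> sets \<nu>" using S sets_nu by simp
  have sets_N1: "sets N1 = sets flagM" unfolding N1_def using sets_nu by simp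
  have N1E: "emeasure N1 E = c * emeasure \<nu> (E \<inter> S)" if E: "E \<in> sets flagM" for E
  proof -
    have E_nu: "E \<in> sets \<nu>" using E sets_nu by simp
    have "emeasure N1 E = (\<integral>\<^sup>+ x. (c * indicator S x) * indicator E x \<partial>\<nu>)"
      unfolding N1_def by (rule emeasure_density) (use E_nu S_nu in auto)
    also have "\<dots> = (\<integral>\<^sup>+ x. c * indicator (E \<inter> S) x \<partial>\<nu>)"
      by (rule nn_integral_cong) (simp add: indicator_inter_arith ac_simps)
    also have "\<dots> = c * emeasure \<nu> (E \<inter> S)"
      by (rule nn_integral_cmult_indicator) (use E_nu S_nu in auto)
    finally show ?thesis .
  qed
  have prob_N1: "prob_space N1"
  proof (rule prob_spaceI)
    have "space N1 = space flagM" using sets_eq_imp_space_eq[OF sets_N1] .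
    then have "emeasure N1 (space N1) = c * emeasure \<nu> (space flagM \<inter> S)"
      using N1E[of "space flagM"] by simp
    also have "space flagM \<inter> S = S" using S sets.sets_into_space by blast
    also have "c * emeasure \<nu> S = ennreal (1/p) * ennreal p"
      by (simp add: c_def p_def nu.emeasure_eq_measure)
    also have "\<dots> = 1" using pos by (simp add: p_def ennreal_mult''[symmetric])
    finally show "emeasure N1 (space N1) = 1" .
  qed
  have "stationary \<mu> N1"
    unfolding stationary_def
  proof (intro conjI ballI)
    show "prob_space N1" by (rule prob_N1)
    show "sets N1 = sets flagM" by (rule sets_N1)
    fix E :: "'n flag set" assume E[measurable]: "E \<in> sets flagM"
    define XE where "XE = {z \<in> space (borel \<Otimes>\<^sub>M (flagM :: 'n flag measure)). actp z \<in> E \<and> snd z \<in> S}"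
    define YE where "YE = {z \<in> space (borel \<Otimes>\<^sub>M (flagM :: 'n flag measure)). actp z \<in> E \<inter> S}"
    define Nl where "Nl = {z \<in> space (borel \<Otimes>\<^sub>M (flagM :: 'n flag measure)). (snd z \<in> S) \<noteq> (actp z \<in> S)}"
    have XE_sets: "XE \<in> sets (borel \<Otimes>\<^sub>M flagM)" unfolding XE_def by measurable
    have YE_sets: "YE \<in> sets (borel \<Otimes>\<^sub>M flagM)" unfolding YE_def by measurable
    have Nl_sets: "Nl \<in> sets (borel \<Otimes>\<^sub>M flagM)" unfolding Nl_def by measurable
    have XE_p: "XE \<in> sets (\<mu> \<Otimes>\<^sub>M \<nu>)" using XE_sets sets_pair by simp
    have YE_p: "YE \<in> sets (\<mu> \<Otimes>\<^sub>M \<nu>)" using YE_sets sets_pair by simp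
    have Nl_null: "Nl \<in> null_sets (\<mu> \<Otimes>\<^sub>M \<nu>)"
      using null Nl_sets sets_pair by (simp add: Nl_def null_sets_def)
    have AEXY: "AE z in \<mu> \<Otimes>\<^sub>M \<nu>. z \<in> XE \<longleftrightarrow> z \<in> YE"
      by (rule AE_I'[OF Nl_null]) (auto simp: XE_def YE_def Nl_def space_pair)
    have eqXY: "emeasure (\<mu> \<Otimes>\<^sub>M \<nu>) XE = emeasure (\<mu> \<Otimes>\<^sub>M \<nu>) YE"
      by (rule emeasure_eq_AE[OF AEXY XE_p YE_p])
    have mXE: "(\<lambda>A. emeasure \<nu> (Pair A -` XE)) \<in> borel_measurable \<mu>"
      by (rule nu.measurable_emeasure_Pair[OF XE_p])
    have preX: "Pair A -` XE = {F \<in> space flagM. act A F \<in> E} \<inter> S" if "invertible A" for A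
      using that by (auto simp: XE_def actp_def space_pair_measure)
    have preY: "Pair A -` YE = {F \<in> space flagM. act A F \<in> E \<inter> S}" if "invertible A" for A
      using that by (auto simp: YE_def actp_def space_pair_measure)
    have "(\<integral>\<^sup>+ A. emeasure N1 {F \<in> space flagM. act A F \<in> E} \<partial>\<mu>) = (\<integral>\<^sup>+ A. c * emeasure \<nu> (Pair A -` XE) \<partial>\<mu>)"
    proof (rule nn_integral_cong_AE)
      show "AE A in \<mu>. emeasure N1 {F \<in> space flagM. act A F \<in> E} = c * emeasure \<nu> (Pair A -` XE)"
        using inv
      proof eventually_elim
        case (elim A)
        have "{F \<in> space flagM. act A F \<in> E} = act A -` E \<inter> space flagM" by auto
        also have "\<dots> \<in> sets flagM" by (rule measurable_sets[OF act_meas[OF elim] E])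
        finally have "emeasure N1 {F \<in> space flagM. act A F \<in> E} = c * emeasure \<nu> ({F \<in> space flagM. act A F \<in> E} \<inter> S)"
          by (rule N1E)
        then show ?case using preX[OF elim] by simp
      qed
    qed
    also have "\<dots> = c * (\<integral>\<^sup>+ A. emeasure \<nu> (Pair A -` XE) \<partial>\<mu>)"
      by (rule nn_integral_cmult[OF mXE])
    also have "(\<integral>\<^sup>+ A. emeasure \<nu> (Pair A -` XE) \<partial>\<mu>) = emeasure (\<mu> \<Otimes>\<^sub>M \<nu>) XE"
      by (rule nu.emeasure_pair_measure_alt[OF XE_p, symmetric])
    also have "\<dots> = emeasure (\<mu> \<Otimes>\<^sub>M \<nu>) YE" by (rule eqXY)
    also have "\<dots> = (\<integral>\<^sup>+ A. emeasure \<nu> (Pair A -` YE) \<partial>\<mu>)"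
      by (rule nu.emeasure_pair_measure_alt[OF YE_p])
    also have "\<dots> = (\<integral>\<^sup>+ A. emeasure \<nu> {F \<in> space flagM. act A F \<in> E \<inter> S} \<partial>\<mu>)"
      by (rule nn_integral_cong_AE) (use inv preY in \<open>auto elim: AE_mp\<close>)
    also have "\<dots> = emeasure \<nu> (E \<inter> S)"
      by (rule stationaryD(3)[OF st, symmetric]) simp
    finally show "emeasure N1 E = (\<integral>\<^sup>+ A. emeasure N1 {F \<in> space flagM. act A F \<in> E} \<partial>\<mu>)"
      using N1E[OF E] by simp
  qed
  then show ?thesis by (simp add: N1_def c_def p_def)
qed

lemma density_ind_emeasure:
  assumes "S \<in> sets M" "E \<in> sets M"
  shows "emeasure (density M (\<lambda>F. c * indicator S F)) E = c * emeasure M (E \<inter> S)"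
proof -
  have "emeasure (density M (\<lambda>F. c * indicator S F)) E = (\<integral>\<^sup>+ x. (c * indicator S x) * indicator E x \<partial>M)"
    by (rule emeasure_density) (use assms in auto)
  also have "\<dots> = (\<integral>\<^sup>+ x. c * indicator (E \<inter> S) x \<partial>M)"
    by (rule nn_integral_cong) (simp add: indicator_inter_arith ac_simps)
  also have "\<dots> = c * emeasure M (E \<inter> S)"
    by (rule nn_integral_cmult_indicator) (use assms in auto)
  finally show ?thesis .
qed

lemma ergodic_01:
  fixes \<mu> :: "(real^'n::finite^'n) measure" and \<nu> :: "'n flag measure" and S :: "'n flag set"
  assumes erg: "ergodic_stationary \<mu> \<nu>"
    and mu_prob: "prob_space \<mu>" and mu_sets: "sets \<mu> = sets borel"
    and inv: "AE A in \<mu>. invertible A"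
    and S[measurable]: "S \<in> sets flagM"
    and null: "emeasure (\<mu> \<Otimes>\<^sub>M \<nu>) {z \<in> space (borel \<Otimes>\<^sub>M flagM). (snd z \<in> S) \<noteq> (actp z \<in> S)} = 0"
  shows "measure \<nu> S = 0 \<or> measure \<nu> S = 1"
proof (rule ccontr)
  assume contra: "\<not> (measure \<nu> S = 0 \<or> measure \<nu> S = 1)"
  have st: "stationary \<mu> \<nu>" using erg by (simp add: ergodic_stationary_def)
  interpret nu: prob_space \<nu> using stationaryD(1)[OF st] .
  have sets_nu: "sets \<nu> = sets flagM" using stationaryD(2)[OF st] .
  have space_nu: "space \<nu> = space flagM" using sets_eq_imp_space_eq[OF sets_nu] .
  define p where "p = measure \<nu> S"
  have p: "0 < p" "p < 1" using contra nu.prob_le_1[of S] measure_nonneg[of \<nu> S]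
    unfolding p_def by linarith+
  define S' where "S' = space flagM - S"
  have S'[measurable]: "S' \<in> sets flagM" unfolding S'_def by measurable
  have pS': "measure \<nu> S' = 1 - p"
    unfolding S'_def p_def using nu.prob_compl[of S] S sets_nu space_nu by simp
  have null': "emeasure (\<mu> \<Otimes>\<^sub>M \<nu>) {z \<in> space (borel \<Otimes>\<^sub>M flagM). (snd z \<in> S') \<noteq> (actp z \<in> S')} = 0"
  proof -
    have "{z \<in> space (borel \<Otimes>\<^sub>M flagM). (snd z \<in> S') \<noteq> (actp z \<in> S')}
        = {z \<in> space (borel \<Otimes>\<^sub>M (flagM :: 'n flag measure)). (snd z \<in> S) \<noteq> (actp z \<in> S)}"
    proof (rule Collect_cong, rule conj_cong[OF refl])
      fix z :: "(real^'n^'n) \<times> 'n flag" assume z: "z \<in> space (borel \<Otimes>\<^sub>M flagM)"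
      have "actp z \<in> space flagM" using measurable_space[OF actp_meas z] .
      moreover have "snd z \<in> space flagM" using z by (auto simp: space_pair_measure)
      ultimately show "((snd z \<in> S') \<noteq> (actp z \<in> S')) = ((snd z \<in> S) \<noteq> (actp z \<in> S))"
        unfolding S'_def by blast
    qed
    then show ?thesis using null by simp
  qed
  define N1 where "N1 = density \<nu> (\<lambda>F. ennreal (1 / measure \<nu> S) * indicator S F)"
  define N2 where "N2 = density \<nu> (\<lambda>F. ennreal (1 / measure \<nu> S') * indicator S' F)"
  have st1: "stationary \<mu> N1" unfolding N1_def
    by (rule restr_stationary[OF st mu_prob mu_sets inv S _ null]) (use p in \<open>simp add: p_def\<close>)
  have st2: "stationary \<mu> N2" unfolding N2_def
    by (rule restr_stationary[OF st mu_prob mu_sets inv S' _ null']) (use p pS' in simp)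
  have S_nu: "S \<in> sets \<nu>" "S' \<in> sets \<nu>" using sets_nu by simp_all
  have N1E: "emeasure N1 E = ennreal (1/p) * emeasure \<nu> (E \<inter> S)" if "E \<in> sets flagM" for E
    unfolding N1_def p_def by (rule density_ind_emeasure) (use that sets_nu in simp_all)
  have N2E: "emeasure N2 E = ennreal (1/(1-p)) * emeasure \<nu> (E \<inter> S')" if "E \<in> sets flagM" for E
    unfolding N2_def pS' by (rule density_ind_emeasure) (use that sets_nu in simp_all)
  have "emeasure N1 S = ennreal (1/p) * ennreal p"
    using N1E[OF S] by (simp add: nu.emeasure_eq_measure p_def)
  also have "\<dots> = 1" using p by (simp add: ennreal_mult''[symmetric])
  finally have N1S: "emeasure N1 S = 1" .
  have "S \<inter> S' = {}" unfolding S'_def by blast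
  then have N2S: "emeasure N2 S = 0" using N2E[OF S] by simp
  have neq: "N1 \<noteq> N2"
  proof
    assume "N1 = N2" then show False using N1S N2S by simp
  qed
  have mN1: "measure N1 E = (1/p) * measure \<nu> (E \<inter> S)" if E: "E \<in> sets flagM" for E
  proof -
    have "emeasure N1 E = ennreal (1/p) * ennreal (measure \<nu> (E \<inter> S))"
      using N1E[OF E] by (simp add: nu.emeasure_eq_measure)
    also have "\<dots> = ennreal ((1/p) * measure \<nu> (E \<inter> S))"
      by (rule ennreal_mult[symmetric]) (use p in simp_all)
    finally show ?thesis by (rule measure_eq_emeasure_eq_ennreal[rotated]) (use p in simp)
  qed
  have mN2: "measure N2 E = (1/(1-p)) * measure \<nu> (E \<inter> S')" if E: "E \<in> sets flagM" for E
  proof -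
    have "emeasure N2 E = ennreal (1/(1-p)) * ennreal (measure \<nu> (E \<inter> S'))"
      using N2E[OF E] by (simp add: nu.emeasure_eq_measure)
    also have "\<dots> = ennreal ((1/(1-p)) * measure \<nu> (E \<inter> S'))"
      by (rule ennreal_mult[symmetric]) (use p in simp_all)
    finally show ?thesis by (rule measure_eq_emeasure_eq_ennreal[rotated]) (use p in simp)
  qed
  have dec: "measure \<nu> E = p * measure N1 E + (1 - p) * measure N2 E" if E: "E \<in> sets flagM" for E
  proof -
    have E_nu: "E \<in> sets \<nu>" using E sets_nu by simp
    have "E \<inter> S' = E - S" unfolding S'_def using E sets.sets_into_space by blast
    then have "measure \<nu> (E \<inter> S') = measure \<nu> E - measure \<nu> (E \<inter> S)"
      using nu.finite_measure_Diff'[OF E_nu S_nu(1)] by simp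
    then show ?thesis using mN1[OF E] mN2[OF E] p by (simp add: field_simps)
  qed
  have "\<exists>N1 N2 (t::real). stationary \<mu> N1 \<and> stationary \<mu> N2 \<and> N1 \<noteq> N2 \<and> 0 < t \<and> t < 1 \<and>
           (\<forall>E\<in>sets flagM. measure \<nu> E = t * measure N1 E + (1 - t) * measure N2 E)"
    apply (rule exI[of _ N1], rule exI[of _ N2], rule exI[of _ p])
    using st1 st2 neq p dec by simp
  then show False using erg by (simp add: ergodic_stationary_def)
qed



theorem lemma4:
  fixes \<mu> :: "(real^'n::finite^'n) measure"
    and \<nu> :: "'n flag measure"
    and i :: nat
    and K :: "'n flag \<Rightarrow> 'n flag measure"
    and P :: "'w measure"
    and A :: "int \<Rightarrow> 'w \<Rightarrow> real^'n^'n"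
    and F :: "int \<Rightarrow> 'w \<Rightarrow> 'n flag"
  assumes d2: "CARD('n) \<ge> 2"
    and i_range: "1 \<le> i" "i \<le> CARD('n) - 1"
    \<comment> \<open>mu: Borel probability on GL(R^d) with integrable log singular values\<close>
    and mu_prob: "prob_space \<mu>" and mu_sets: "sets \<mu> = sets borel"
    and mu_GL: "AE a in \<mu>. invertible a"
    and mu_int: "\<And>j. 1 \<le> j \<Longrightarrow> j \<le> CARD('n) \<Longrightarrow> integrable \<mu> (\<lambda>a. \<bar>ln (sing_val a j)\<bar>)"
    \<comment> \<open>nu ergodic stationary, unique stationary lift of nu_i\<close>
    and nu_erg: "ergodic_stationary \<mu> \<nu>"
    and nu_unique: "\<And>N. stationary \<mu> N \<Longrightarrow>
          distr N (flag_iM i) (flag_i i) = distr \<nu> (flag_iM i) (flag_i i) \<Longrightarrow> N = \<nu>"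
    \<comment> \<open>Borel disintegration of nu over nu_i\<close>
    and K_meas: "K \<in> measurable (flag_iM i) (prob_algebra flagM)"
    and K_disint: "\<And>E. E \<in> sets flagM \<Longrightarrow>
          emeasure \<nu> E = (\<integral>\<^sup>+ x. emeasure (K x) E \<partial>(distr \<nu> (flag_iM i) (flag_i i)))"
    and K_fiber: "AE x in distr \<nu> (flag_iM i) (flag_i i).
          emeasure (K x) {G \<in> space flagM. flag_i i G = x} = 1"
    \<comment> \<open>the random process\<close>
    and P_prob: "prob_space P"
    and A_meas: "\<And>n. A n \<in> measurable P borel"
    and F_meas: "\<And>n. F n \<in> measurable P flagM"
    and A_indep: "prob_space.indep_vars P (\<lambda>_. borel) A UNIV"
    and A_distr: "\<And>n. distr P borel (A n) = \<mu>"
    and F_distr: "\<And>n. distr P flagM (F n) = \<nu>"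
    and stat: "\<And>k. distr P (PiM UNIV (\<lambda>_. pair_measure borel flagM)) (\<lambda>\<omega> n. (A (n + k) \<omega>, F (n + k) \<omega>))
                   = distr P (PiM UNIV (\<lambda>_. pair_measure borel flagM)) (\<lambda>\<omega> n. (A n \<omega>, F n \<omega>))"
    and F_indep: "\<And>n E B. E \<in> sets flagM \<Longrightarrow> B \<in> sets (PiM {n..} (\<lambda>_. borel)) \<Longrightarrow>
          measure P {\<omega> \<in> space P. F n \<omega> \<in> E \<and> restrict (\<lambda>m. A m \<omega>) {n..} \<in> B}
          = measure P {\<omega> \<in> space P. F n \<omega> \<in> E} * measure P {\<omega> \<in> space P. restrict (\<lambda>m. A m \<omega>) {n..} \<in> B}"
    and cocycle: "\<And>n k. AE \<omega> in P. act (mprod (\<lambda>m. A m \<omega>) n k) (F n \<omega>) = F (n + int k + 1) \<omega>"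
    \<comment> \<open>kappa_i is well defined and positive\<close>
    and abs_cont: "AE \<omega> in P. absolutely_continuous (K (flag_i i (F 1 \<omega>)))
                      (distr (K (flag_i i (F 0 \<omega>))) flagM (act (A 0 \<omega>)))"
    and kappa_neg_fin: "(\<integral>\<^sup>+ \<omega>. ennreal (max 0 (- ln (enn2real (RN_deriv (K (flag_i i (F 1 \<omega>)))
                      (distr (K (flag_i i (F 0 \<omega>))) flagM (act (A 0 \<omega>))) (F 1 \<omega>))))) \<partial>P) < \<infinity>"
    and kappa_pos: "(\<integral>\<^sup>+ \<omega>. ennreal (max 0 (- ln (enn2real (RN_deriv (K (flag_i i (F 1 \<omega>)))
                      (distr (K (flag_i i (F 0 \<omega>))) flagM (act (A 0 \<omega>))) (F 1 \<omega>))))) \<partial>P)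
                  < (\<integral>\<^sup>+ \<omega>. ennreal (max 0 (ln (enn2real (RN_deriv (K (flag_i i (F 1 \<omega>)))
                      (distr (K (flag_i i (F 0 \<omega>))) flagM (act (A 0 \<omega>))) (F 1 \<omega>))))) \<partial>P)"
  shows "AE \<omega> in P. \<forall>n. \<forall>G \<in> space flagM. emeasure (K (flag_i i (F n \<omega>))) {G} = 0"
proof -
  interpret P: prob_space P by (rule P_prob)
  interpret mu: prob_space \<mu> by (rule mu_prob)
  have st: "stationary \<mu> \<nu>" using nu_erg by (simp add: ergodic_stationary_def)
  interpret nu: prob_space \<nu> using stationaryD(1)[OF st] .
  have sets_nu: "sets \<nu> = sets flagM" using stationaryD(2)[OF st] .
  have space_nu: "space \<nu> = space flagM" using sets_eq_imp_space_eq[OF sets_nu] .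
  have Kx: "prob_space (K x) \<and> sets (K x) = sets flagM" if "x \<in> space (flag_iM i)" for x
    using measurable_space[OF K_meas that] by (simp add: space_prob_algebra)
  have KG: "prob_space (K (flag_i i G)) \<and> sets (K (flag_i i G)) = sets flagM" if "G \<in> space flagM" for G
    by (rule Kx) (rule measurable_space[OF flag_i_meas that])
  have KG_space: "space (K (flag_i i G)) = space flagM" if "G \<in> space flagM" for G
    using sets_eq_imp_space_eq KG[OF that] by blast
  have Ksub: "(\<lambda>G. K (flag_i i G)) \<in> flagM \<rightarrow>\<^sub>M subprob_algebra flagM"
    by (rule measurable_compose[OF flag_i_meas measurable_prob_algebraD[OF K_meas]])
  define h where "h = (\<lambda>G. emeasure (K (flag_i i G)) {G})"
  have h_meas[measurable]: "h \<in> borel_measurable flagM"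
    unfolding h_def by (rule emeasure_measurable_subprob_algebra2[OF diag_flagM Ksub])
  define H where "H = {G \<in> space flagM. 0 < h G}"
  have H_sets[measurable]: "H \<in> sets flagM" unfolding H_def by measurable
  have Fsp: "F n \<omega> \<in> space flagM" if "\<omega> \<in> space P" for n \<omega>
    using measurable_space[OF F_meas that] .
  note [measurable] = A_meas F_meas
  have inv0: "AE \<omega> in P. invertible (A 0 \<omega>)"
  proof -
    have "AE a in distr P borel (A 0). invertible a" unfolding A_distr[of 0] by (rule mu_GL)
    then show ?thesis by (rule AE_distrD[OF A_meas])
  qed
  have coc0: "AE \<omega> in P. act (A 0 \<omega>) (F 0 \<omega>) = F 1 \<omega>"
    using cocycle[of 0 0] by simp
  have h_pos_le: "0 < h G \<Longrightarrow> h G \<le> 1" if "G \<in> space flagM" for G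
    using prob_space.emeasure_le_1[of "K (flag_i i G)" "{G}"] KG[OF that] by (simp add: h_def)

  \<comment> \<open>Step 1: atoms are carried forward\<close>
  have step1: "AE \<omega> in P. F 0 \<omega> \<in> H \<longrightarrow> F 1 \<omega> \<in> H"
    using AE_space inv0 coc0 abs_cont
  proof eventually_elim
    case (elim \<omega>)
    show ?case
    proof
      assume F0H: "F 0 \<omega> \<in> H"
      define x0 where "x0 = flag_i i (F 0 \<omega>)"
      define x1 where "x1 = flag_i i (F 1 \<omega>)"
      have F0s: "F 0 \<omega> \<in> space flagM" and F1s: "F 1 \<omega> \<in> space flagM" using Fsp elim(1) by auto
      have K0: "sets (K x0) = sets flagM" "space (K x0) = space flagM"
        using KG[OF F0s] KG_space[OF F0s] by (auto simp: x0_def)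
      have K1: "sets (K x1) = sets flagM"
        using KG[OF F1s] by (auto simp: x1_def)
      have actm: "act (A 0 \<omega>) \<in> K x0 \<rightarrow>\<^sub>M flagM"
        unfolding measurable_cong_sets[OF K0(1) refl] by (rule act_meas[OF elim(2)])
      have sing: "{F 1 \<omega>} \<in> sets flagM" by (rule singleton_flagM[OF F1s])
      have pre: "act (A 0 \<omega>) -` {F 1 \<omega>} \<inter> space (K x0) \<in> sets (K x0)"
        by (rule measurable_sets[OF actm sing])
      have sub: "{F 0 \<omega>} \<subseteq> act (A 0 \<omega>) -` {F 1 \<omega>} \<inter> space (K x0)"
        using elim(3) F0s K0(2) by auto
      have "0 < h (F 0 \<omega>)" using F0H by (simp add: H_def)
      also have "h (F 0 \<omega>) = emeasure (K x0) {F 0 \<omega>}" by (simp add: h_def x0_def)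
      also have "\<dots> \<le> emeasure (K x0) (act (A 0 \<omega>) -` {F 1 \<omega>} \<inter> space (K x0))"
        by (rule emeasure_mono[OF sub pre])
      also have "\<dots> = emeasure (distr (K x0) flagM (act (A 0 \<omega>))) {F 1 \<omega>}"
        by (rule emeasure_distr[OF actm sing, symmetric])
      finally have Npos: "emeasure (distr (K x0) flagM (act (A 0 \<omega>))) {F 1 \<omega>} \<noteq> 0" by simp
      have "emeasure (K x1) {F 1 \<omega>} \<noteq> 0"
      proof
        assume z: "emeasure (K x1) {F 1 \<omega>} = 0"
        have "{F 1 \<omega>} \<in> null_sets (K x1)" using z sing K1 by (simp add: null_sets_def)
        then have "{F 1 \<omega>} \<in> null_sets (distr (K x0) flagM (act (A 0 \<omega>)))"
          using elim(4) unfolding absolutely_continuous_def x0_def x1_def by blast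
        then show False using Npos by (simp add: null_sets_def)
      qed
      then show "F 1 \<omega> \<in> H" using F1s by (simp add: H_def h_def x1_def zero_less_iff_neq_zero)
    qed
  qed

  \<comment> \<open>Step 2: invariance of the atomic part\<close>
  define S0 where "S0 = {\<omega> \<in> space P. F 0 \<omega> \<in> H}"
  define S1 where "S1 = {\<omega> \<in> space P. F 1 \<omega> \<in> H}"
  have S0s: "S0 \<in> sets P" unfolding S0_def by measurable
  have S1s: "S1 \<in> sets P" unfolding S1_def by measurable
  have PH: "measure P {\<omega> \<in> space P. F n \<omega> \<in> H} = measure \<nu> H" for n
  proof -
    have "measure \<nu> H = measure (distr P flagM (F n)) H" by (simp add: F_distr)
    also have "\<dots> = measure P (F n -` H \<inter> space P)" by (rule measure_distr[OF F_meas H_sets])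
    also have "F n -` H \<inter> space P = {\<omega> \<in> space P. F n \<omega> \<in> H}" by blast
    finally show ?thesis by simp
  qed
  have "measure P (S0 \<inter> S1) = measure P S0"
  proof (rule measure_eq_AE)
    show "AE \<omega> in P. (\<omega> \<in> S0 \<inter> S1) = (\<omega> \<in> S0)"
      using step1 by eventually_elim (auto simp: S0_def S1_def)
  qed (use S0s S1s in auto)
  then have "measure P (S1 - S0) = 0"
    using P.finite_measure_Diff'[OF S1s S0s] PH[of 0] PH[of 1]
    by (simp add: S0_def S1_def Int_commute)
  then have S10null: "S1 - S0 \<in> null_sets P"
    using S0s S1s by (simp add: null_sets_def P.emeasure_eq_measure)
  have "AE \<omega> in P. \<omega> \<notin> S1 - S0" by (rule AE_I'[OF S10null]) auto
  then have step2: "AE \<omega> in P. (F 0 \<omega> \<in> H) = (F 1 \<omega> \<in> H)"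
    using step1 AE_space by eventually_elim (auto simp: S0_def S1_def)

  \<comment> \<open>Step 3: joint law of (A 0, F 0)\<close>
  have AF0[measurable]: "(\<lambda>\<omega>. (A 0 \<omega>, F 0 \<omega>)) \<in> P \<rightarrow>\<^sub>M borel \<Otimes>\<^sub>M flagM" by measurable
  have joint: "\<mu> \<Otimes>\<^sub>M \<nu> = distr P (borel \<Otimes>\<^sub>M flagM) (\<lambda>\<omega>. (A 0 \<omega>, F 0 \<omega>))"
  proof (rule pair_measure_eqI)
    show "sigma_finite_measure \<mu>" by unfold_locales
    show "sigma_finite_measure \<nu>" by unfold_locales
    show "sets (\<mu> \<Otimes>\<^sub>M \<nu>) = sets (distr P (borel \<Otimes>\<^sub>M flagM) (\<lambda>\<omega>. (A 0 \<omega>, F 0 \<omega>)))"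
      using sets_pair_measure_cong[OF mu_sets sets_nu] by simp
    fix Ab B assume Ab: "Ab \<in> sets \<mu>" and B: "B \<in> sets \<nu>"
    have Ab': "Ab \<in> sets borel" using Ab mu_sets by simp
    have B': "B \<in> sets flagM" using B sets_nu by simp
    define Bs where "Bs = {f \<in> space (PiM {0::int..} (\<lambda>_. borel :: (real^'n^'n) measure)). f 0 \<in> Ab}"
    have Bs_sets: "Bs \<in> sets (PiM {0::int..} (\<lambda>_. borel :: (real^'n^'n) measure))"
    proof -
      have "(\<lambda>f. f 0) -` Ab \<inter> space (PiM {0::int..} (\<lambda>_. borel :: (real^'n^'n) measure)) \<in> sets (PiM {0::int..} (\<lambda>_. borel :: (real^'n^'n) measure))"
      proof -
        have c: "(\<lambda>f. f (0::int)) \<in> PiM {0::int..} (\<lambda>_. borel :: (real^'n^'n) measure) \<rightarrow>\<^sub>M borel"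
          by (rule measurable_component_singleton) simp
        show ?thesis by (rule measurable_sets[OF c Ab'])
      qed
      moreover have "(\<lambda>f. f 0) -` Ab \<inter> space (PiM {0::int..} (\<lambda>_. borel :: (real^'n^'n) measure)) = Bs"
        unfolding Bs_def by blast
      ultimately show ?thesis by simp
    qed
    have rBs: "(restrict (\<lambda>m. A m \<omega>) {0..} \<in> Bs) = (A 0 \<omega> \<in> Ab)" for \<omega>
      unfolding Bs_def by (simp add: space_PiM)
    have ind: "measure P {\<omega> \<in> space P. F 0 \<omega> \<in> B \<and> A 0 \<omega> \<in> Ab}
        = measure P {\<omega> \<in> space P. F 0 \<omega> \<in> B} * measure P {\<omega> \<in> space P. A 0 \<omega> \<in> Ab}"
      using F_indep[OF B' Bs_sets] by (simp add: rBs)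
    have eA: "emeasure \<mu> Ab = ennreal (measure P {\<omega> \<in> space P. A 0 \<omega> \<in> Ab})"
    proof -
      have "emeasure \<mu> Ab = emeasure (distr P borel (A 0)) Ab" by (simp add: A_distr)
      also have "\<dots> = emeasure P (A 0 -` Ab \<inter> space P)" by (rule emeasure_distr[OF A_meas Ab'])
      also have "A 0 -` Ab \<inter> space P = {\<omega> \<in> space P. A 0 \<omega> \<in> Ab}" by blast
      finally show ?thesis by (simp add: P.emeasure_eq_measure)
    qed
    have eB: "emeasure \<nu> B = ennreal (measure P {\<omega> \<in> space P. F 0 \<omega> \<in> B})"
    proof -
      have "emeasure \<nu> B = emeasure (distr P flagM (F 0)) B" by (simp add: F_distr)
      also have "\<dots> = emeasure P (F 0 -` B \<inter> space P)" by (rule emeasure_distr[OF F_meas B'])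
      also have "F 0 -` B \<inter> space P = {\<omega> \<in> space P. F 0 \<omega> \<in> B}" by blast
      finally show ?thesis by (simp add: P.emeasure_eq_measure)
    qed
    have "emeasure (distr P (borel \<Otimes>\<^sub>M flagM) (\<lambda>\<omega>. (A 0 \<omega>, F 0 \<omega>))) (Ab \<times> B)
        = emeasure P ((\<lambda>\<omega>. (A 0 \<omega>, F 0 \<omega>)) -` (Ab \<times> B) \<inter> space P)"
      by (rule emeasure_distr[OF AF0]) (use Ab' B' in simp)
    also have "(\<lambda>\<omega>. (A 0 \<omega>, F 0 \<omega>)) -` (Ab \<times> B) \<inter> space P = {\<omega> \<in> space P. F 0 \<omega> \<in> B \<and> A 0 \<omega> \<in> Ab}"
      by blast
    also have "emeasure P \<dots> = ennreal (measure P {\<omega> \<in> space P. F 0 \<omega> \<in> B} * measure P {\<omega> \<in> space P. A 0 \<omega> \<in> Ab})"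
      by (simp add: P.emeasure_eq_measure ind)
    also have "\<dots> = emeasure \<mu> Ab * emeasure \<nu> B"
      by (simp add: eA eB ennreal_mult[symmetric] mult.commute)
    finally show "emeasure \<mu> Ab * emeasure \<nu> B = emeasure (distr P (borel \<Otimes>\<^sub>M flagM) (\<lambda>\<omega>. (A 0 \<omega>, F 0 \<omega>))) (Ab \<times> B)"
      by simp
  qed

  \<comment> \<open>Step 4: the invariance null set\<close>
  define Nl where "Nl = {z \<in> space (borel \<Otimes>\<^sub>M (flagM :: 'n flag measure)). (snd z \<in> H) \<noteq> (actp z \<in> H)}"
  have Nl_sets: "Nl \<in> sets (borel \<Otimes>\<^sub>M flagM)" unfolding Nl_def by measurable
  define T where "T = {\<omega> \<in> space P. (F 0 \<omega> \<in> H) \<noteq> (actp (A 0 \<omega>, F 0 \<omega>) \<in> H)}"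
  have T_sets: "T \<in> sets P" unfolding T_def by measurable
  have preT: "(\<lambda>\<omega>. (A 0 \<omega>, F 0 \<omega>)) -` Nl \<inter> space P = T"
    unfolding Nl_def T_def using Fsp by (auto simp: space_pair_measure)
  have "AE \<omega> in P. \<omega> \<notin> T"
    using inv0 coc0 step2 by eventually_elim (auto simp: T_def actp_def)
  then have "emeasure P T = 0"
    by (subst AE_iff_measurable[OF T_sets, symmetric]) (use T_sets sets.sets_into_space in auto)
  then have null: "emeasure (\<mu> \<Otimes>\<^sub>M \<nu>) Nl = 0"
    unfolding joint by (subst emeasure_distr[OF AF0 Nl_sets]) (simp add: preT)

  \<comment> \<open>Step 5: ergodicity\<close>
  have p01: "measure \<nu> H = 0 \<or> measure \<nu> H = 1"
    by (rule ergodic_01[OF nu_erg mu_prob mu_sets mu_GL H_sets null[unfolded Nl_def]])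

  define nui where "nui = distr \<nu> (flag_iM i) (flag_i i)"
  have nui_F: "nui = distr P (flag_iM i) (\<lambda>\<omega>. flag_i i (F n \<omega>))" for n
  proof -
    have "nui = distr (distr P flagM (F n)) (flag_iM i) (flag_i i)" by (simp add: nui_def F_distr)
    also have "\<dots> = distr P (flag_iM i) (flag_i i \<circ> F n)" by (rule distr_distr[OF flag_i_meas F_meas])
    finally show ?thesis by (simp add: comp_def)
  qed

  show ?thesis
  proof (cases "measure \<nu> H = 0")
    case True
    have "emeasure \<nu> H = 0" using True by (simp add: nu.emeasure_eq_measure)
    then have int0: "(\<integral>\<^sup>+ x. emeasure (K x) H \<partial>nui) = 0" using K_disint[OF H_sets] by (simp add: nui_def)
    have mK: "(\<lambda>x. emeasure (K x) H) \<in> borel_measurable nui"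
    proof -
      have "(\<lambda>x. emeasure (K x) H) \<in> borel_measurable (flag_iM i)"
        by (rule measurable_compose[OF measurable_prob_algebraD[OF K_meas] measurable_emeasure_subprob_algebra[OF H_sets]])
      then show ?thesis by (simp add: nui_def)
    qed
    have AEH: "AE x in nui. emeasure (K x) H = 0" using int0 nn_integral_0_iff_AE[OF mK] by simp
    have AEQ: "AE x in nui. \<forall>G\<in>space flagM. emeasure (K x) {G} = 0"
      using AEH K_fiber[folded nui_def] AE_space
    proof eventually_elim
      case (elim x)
      have xs: "x \<in> space (flag_iM i)" using elim(3) by (simp add: nui_def)
      interpret Kp: prob_space "K x" using Kx[OF xs] by simp
      have Ks: "sets (K x) = sets flagM" using Kx[OF xs] by simp
      have Ksp: "space (K x) = space flagM" using sets_eq_imp_space_eq[OF Ks] .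
      define Fb where "Fb = {G \<in> space flagM. flag_i i G = x}"
      have Fb1: "emeasure (K x) Fb = 1" using elim(2) by (simp add: Fb_def)
      then have Fbs: "Fb \<in> sets (K x)" using emeasure_notin_sets by force
      have compl0: "emeasure (K x) (space flagM - Fb) = 0"
      proof -
        have "measure (K x) (space (K x) - Fb) = 1 - measure (K x) Fb" by (rule Kp.prob_compl[OF Fbs])
        also have "measure (K x) Fb = 1" using Fb1 by (simp add: Kp.emeasure_eq_measure)
        finally show ?thesis using Ksp by (simp add: Kp.emeasure_eq_measure)
      qed
      show ?case
      proof
        fix G :: "'n flag" assume G: "G \<in> space flagM"
        show "emeasure (K x) {G} = 0"
        proof (cases "flag_i i G = x")
          case True
          show ?thesis
          proof (rule ccontr)
            assume nz: "emeasure (K x) {G} \<noteq> 0"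
            then have "G \<in> H" using G True by (simp add: H_def h_def zero_less_iff_neq_zero)
            then have "emeasure (K x) {G} \<le> emeasure (K x) H"
              by (intro emeasure_mono) (use H_sets Ks in auto)
            then show False using nz elim(1) by simp
          qed
        next
          case False
          have "emeasure (K x) {G} \<le> emeasure (K x) (space flagM - Fb)"
          proof (rule emeasure_mono)
            show "space flagM - Fb \<in> sets (K x)" using sets.compl_sets[OF Fbs] Ksp by simp
            show "{G} \<subseteq> space flagM - Fb" using G False by (auto simp: Fb_def)
          qed
          then show ?thesis using compl0 by simp
        qed
      qed
    qed
    have "AE \<omega> in P. \<forall>G\<in>space flagM. emeasure (K (flag_i i (F n \<omega>))) {G} = 0" for n
    proof -
      have m: "(\<lambda>\<omega>. flag_i i (F n \<omega>)) \<in> P \<rightarrow>\<^sub>M flag_iM i" by measurable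
      show ?thesis using AE_distrD[OF m] AEQ[unfolded nui_F[of n]] by blast
    qed
    then show ?thesis by (simp add: AE_all_countable)
  next
    case False
    then have p1: "measure \<nu> H = 1" using p01 by simp
    have AEnu: "AE G in \<nu>. G \<in> H"
    proof (rule AE_I')
      show "space \<nu> - H \<in> null_sets \<nu>"
        using nu.prob_compl[of H] p1 H_sets sets_nu space_nu sets.compl_sets[OF H_sets]
        by (simp add: null_sets_def nu.emeasure_eq_measure)
    qed auto
    have AEFH: "AE \<omega> in P. F n \<omega> \<in> H" for n
    proof -
      have "AE G in distr P flagM (F n). G \<in> H" unfolding F_distr[of n] by (rule AEnu)
      then show ?thesis by (rule AE_distrD[OF F_meas])
    qed
    define \<phi> where "\<phi> = (\<lambda>G. max 0 (- ln (enn2real (h G))))"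
    have phi_meas[measurable]: "\<phi> \<in> borel_measurable flagM" unfolding \<phi>_def by measurable
    define X where "X = (\<lambda>\<omega>. \<phi> (F 0 \<omega>))"
    define Y where "Y = (\<lambda>\<omega>. \<phi> (F 1 \<omega>))"
    have dX: "distr P borel (\<lambda>\<omega>. \<phi> (F n \<omega>)) = distr \<nu> borel \<phi>" for n
    proof -
      have "distr \<nu> borel \<phi> = distr (distr P flagM (F n)) borel \<phi>" by (simp add: F_distr)
      also have "\<dots> = distr P borel (\<phi> \<circ> F n)" by (rule distr_distr[OF phi_meas F_meas])
      finally show ?thesis by (simp add: comp_def)
    qed
    have tr: "(\<integral>\<^sup>+\<omega>. ennreal (Y \<omega> - X \<omega>) \<partial>P) \<le> (\<integral>\<^sup>+\<omega>. ennreal (X \<omega> - Y \<omega>) \<partial>P)"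
    proof (rule trunc_ineq[OF P_prob])
      show "X \<in> borel_measurable P" unfolding X_def by measurable
      show "Y \<in> borel_measurable P" unfolding Y_def by measurable
      show "\<And>w. 0 \<le> X w" "\<And>w. 0 \<le> Y w" by (simp_all add: X_def Y_def \<phi>_def)
      show "distr P borel X = distr P borel Y" by (simp only: X_def Y_def dX)
    qed
    define RN where "RN = (\<lambda>\<omega>. RN_deriv (K (flag_i i (F 1 \<omega>)))
                      (distr (K (flag_i i (F 0 \<omega>))) flagM (act (A 0 \<omega>))) (F 1 \<omega>))"
    have key: "AE \<omega> in P. ln (enn2real (RN \<omega>)) = Y \<omega> - X \<omega>"
      using AE_space inv0 coc0 abs_cont AEFH[of 0] AEFH[of 1]
    proof eventually_elim
      case (elim \<omega>)
      define x0 where "x0 = flag_i i (F 0 \<omega>)"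
      define x1 where "x1 = flag_i i (F 1 \<omega>)"
      have F0s: "F 0 \<omega> \<in> space flagM" and F1s: "F 1 \<omega> \<in> space flagM" using Fsp elim(1) by auto
      have K0: "sets (K x0) = sets flagM" "space (K x0) = space flagM"
        using KG[OF F0s] KG_space[OF F0s] by (auto simp: x0_def)
      have K1: "sets (K x1) = sets flagM" "prob_space (K x1)"
        using KG[OF F1s] by (auto simp: x1_def)
      interpret K1p: prob_space "K x1" by (rule K1(2))
      define N where "N = distr (K x0) flagM (act (A 0 \<omega>))"
      have actm: "act (A 0 \<omega>) \<in> K x0 \<rightarrow>\<^sub>M flagM"
        unfolding measurable_cong_sets[OF K0(1) refl] by (rule act_meas[OF elim(2)])
      have sing: "{F 1 \<omega>} \<in> sets flagM" by (rule singleton_flagM[OF F1s])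
      have sing1: "{F 1 \<omega>} \<in> sets (K x1)" using sing K1 by simp
      have sN: "sets N = sets (K x1)" using K1 by (simp add: N_def)
      have ac: "absolutely_continuous (K x1) N" using elim(4) by (simp add: N_def x0_def x1_def)
      have dens: "density (K x1) (RN_deriv (K x1) N) = N"
        by (rule K1p.density_RN_deriv[OF ac sN])
      have "emeasure N {F 1 \<omega>} = emeasure (density (K x1) (RN_deriv (K x1) N)) {F 1 \<omega>}"
        by (simp add: dens)
      also have "\<dots> = (\<integral>\<^sup>+ y. RN_deriv (K x1) N y * indicator {F 1 \<omega>} y \<partial>K x1)"
        by (rule emeasure_density[OF borel_measurable_RN_deriv sing1])
      also have "\<dots> = RN_deriv (K x1) N (F 1 \<omega>) * emeasure (K x1) {F 1 \<omega>}"
        by (rule nn_integral_indicator_singleton[OF sing1])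
      finally have e1: "emeasure N {F 1 \<omega>} = RN \<omega> * h (F 1 \<omega>)"
        by (simp add: RN_def N_def x0_def x1_def h_def)
      have preF: "act (A 0 \<omega>) -` {F 1 \<omega>} \<inter> space (K x0) = {F 0 \<omega>}"
        using elim(3) F0s K0(2) act_inj[OF elim(2)] by (auto simp: space_flagM)
      have "emeasure N {F 1 \<omega>} = emeasure (K x0) (act (A 0 \<omega>) -` {F 1 \<omega>} \<inter> space (K x0))"
        unfolding N_def by (rule emeasure_distr[OF actm sing])
      also have "\<dots> = h (F 0 \<omega>)" unfolding preF by (simp add: h_def x0_def)
      finally have e2: "RN \<omega> * h (F 1 \<omega>) = h (F 0 \<omega>)" using e1 by simp
      have h0: "0 < h (F 0 \<omega>)" "h (F 0 \<omega>) \<le> 1" using elim(5) h_pos_le[OF F0s] by (auto simp: H_def)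
      have h1: "0 < h (F 1 \<omega>)" "h (F 1 \<omega>) \<le> 1" using elim(6) h_pos_le[OF F1s] by (auto simp: H_def)
      define a where "a = enn2real (h (F 0 \<omega>))"
      define b where "b = enn2real (h (F 1 \<omega>))"
      have ha: "h (F 0 \<omega>) = ennreal a" unfolding a_def
        by (intro ennreal_enn2real[symmetric] le_less_trans[OF h0(2)]) simp
      have hb: "h (F 1 \<omega>) = ennreal b" unfolding b_def
        by (intro ennreal_enn2real[symmetric] le_less_trans[OF h1(2)]) simp
      have a: "0 < a" "a \<le> 1" using h0 ha by (auto simp: ennreal_le_1)
      have b: "0 < b" "b \<le> 1" using h1 hb by (auto simp: ennreal_le_1)
      have RNfin: "RN \<omega> \<noteq> \<top>"
      proof
        assume "RN \<omega> = \<top>"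
        then have "RN \<omega> * h (F 1 \<omega>) = \<top>" using h1 by (simp add: ennreal_mult_eq_top_iff)
        then show False using e2 ha by simp
      qed
      define r where "r = enn2real (RN \<omega>)"
      have RNr: "RN \<omega> = ennreal r" unfolding r_def using RNfin by (simp add: less_top)
      have r0: "0 \<le> r" unfolding r_def by simp
      have "ennreal (r * b) = ennreal a" using e2 RNr ha hb r0 b by (simp add: ennreal_mult)
      then have "r * b = a" using r0 b a by (simp add: ennreal_inj)
      then have rab: "r = a / b" using b by (simp add: field_simps)
      have lna: "ln a \<le> 0" "ln b \<le> 0" using a b by auto
      have "X \<omega> = - ln a" using lna by (simp add: X_def \<phi>_def a_def)
      moreover have "Y \<omega> = - ln b" using lna by (simp add: Y_def \<phi>_def b_def)
      moreover have "ln (enn2real (RN \<omega>)) = ln a - ln b"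
        using a b by (simp add: r_def[symmetric] rab ln_div)
      ultimately show ?case by simp
    qed
    have k1: "(\<integral>\<^sup>+ \<omega>. ennreal (max 0 (- ln (enn2real (RN \<omega>)))) \<partial>P) = (\<integral>\<^sup>+\<omega>. ennreal (X \<omega> - Y \<omega>) \<partial>P)"
      by (rule nn_integral_cong_AE) (use key in \<open>auto simp: ennreal_max_0 elim: AE_mp\<close>)
    have k2: "(\<integral>\<^sup>+ \<omega>. ennreal (max 0 (ln (enn2real (RN \<omega>)))) \<partial>P) = (\<integral>\<^sup>+\<omega>. ennreal (Y \<omega> - X \<omega>) \<partial>P)"
      by (rule nn_integral_cong_AE) (use key in \<open>auto simp: ennreal_max_0 elim: AE_mp\<close>)
    have "(\<integral>\<^sup>+\<omega>. ennreal (X \<omega> - Y \<omega>) \<partial>P) < (\<integral>\<^sup>+\<omega>. ennreal (Y \<omega> - X \<omega>) \<partial>P)"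
      using kappa_pos unfolding k1[unfolded RN_def] k2[unfolded RN_def] .
    then show ?thesis using tr by simp
  qed
qed


end
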